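(* There exist a finitely generated residually finite group $G$ and a finite symmetric generating set $S$ of $G$ such that the lazy random walk $(X_n)_{n\ge0}$ on $\mathrm{Cay}(G,S)$ satisfies $$\lim_{n\to\infty}\mathbb{E}[D_G(X_n)]=\infty,$$ while $\sum_{k\ge2}\frac{1}{[G:\Lambda_k]}<\infty$.
   Context: For $g\ne e$, $D_G(g)=\min\{[G:N]: N\lhd G\text{ of finite index},\ g\notin N\}$, and $D_G(e)=0$. For $k\ge2$, $\Lambda_k$ is the intersection of all normal subgroups of $G$ of index at most $k$. The lazy random walk on $\mathrm{Cay}(G,S)$ is the Markov chain with $X_0=e$ and transition matrix $\frac12I+\frac12P$, $P(x,y)=\frac1{|S|}\#\{s\in S:y=xs\}$. *)

theory Defs
  imports "HOL-Algebra.Algebra" "HOL-Probability.Probability"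
begin

text \<open>Index of a subgroup H of G: number of right cosets (0 if infinitely many).\<close>
definition grp_index :: "('a, 'b) monoid_scheme \<Rightarrow> 'a set \<Rightarrow> nat" where
  "grp_index G H = card (rcosets\<^bsub>G\<^esub> H)"

definition finite_index_normal :: "('a, 'b) monoid_scheme \<Rightarrow> 'a set \<Rightarrow> bool" where
  "finite_index_normal G N \<longleftrightarrow> N \<lhd> G \<and> finite (rcosets\<^bsub>G\<^esub> N)"

definition finitely_generated :: "('a, 'b) monoid_scheme \<Rightarrow> bool" where
  "finitely_generated G \<longleftrightarrow> (\<exists>T. finite T \<and> T \<subseteq> carrier G \<and> generate G T = carrier G)"

definition residually_finite :: "('a, 'b) monoid_scheme \<Rightarrow> bool" where
  "residually_finite G \<longleftrightarrow>
     (\<forall>g\<in>carrier G. g \<noteq> \<one>\<^bsub>G\<^esub> \<longrightarrow> (\<exists>N. finite_index_normal G N \<and> g \<notin> N))"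

definition D_G :: "('a, 'b) monoid_scheme \<Rightarrow> 'a \<Rightarrow> nat" where
  "D_G G g = (if g = \<one>\<^bsub>G\<^esub> then 0
     else (LEAST n. \<exists>N. finite_index_normal G N \<and> g \<notin> N \<and> grp_index G N = n))"

definition Lambda :: "('a, 'b) monoid_scheme \<Rightarrow> nat \<Rightarrow> 'a set" where
  "Lambda G k = carrier G \<inter> \<Inter> {N. finite_index_normal G N \<and> grp_index G N \<le> k}"

definition symmetric_gen_set :: "('a, 'b) monoid_scheme \<Rightarrow> 'a set \<Rightarrow> bool" where
  "symmetric_gen_set G S \<longleftrightarrow> finite S \<and> S \<noteq> {} \<and> S \<subseteq> carrier G \<and>
     (\<forall>s\<in>S. inv\<^bsub>G\<^esub> s \<in> S) \<and> generate G S = carrier G"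

definition lazy_step :: "('a, 'b) monoid_scheme \<Rightarrow> 'a set \<Rightarrow> 'a \<Rightarrow> 'a pmf" where
  "lazy_step G S x = bind_pmf (bernoulli_pmf (1/2))
     (\<lambda>b. if b then return_pmf x else map_pmf (\<lambda>s. x \<otimes>\<^bsub>G\<^esub> s) (pmf_of_set S))"

primrec lazy_walk :: "('a, 'b) monoid_scheme \<Rightarrow> 'a set \<Rightarrow> nat \<Rightarrow> 'a pmf" where
  "lazy_walk G S 0 = return_pmf \<one>\<^bsub>G\<^esub>"
| "lazy_walk G S (Suc n) = bind_pmf (lazy_walk G S n) (lazy_step G S)"

end

theory Submission
  imports Defs
begin

inductive reach :: "('a,'b) monoid_scheme \<Rightarrow> 'a set \<Rightarrow> nat \<Rightarrow> 'a \<Rightarrow> bool" for G S where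
  r0: "reach G S 0 \<one>\<^bsub>G\<^esub>"
| rstay: "reach G S n g \<Longrightarrow> reach G S (Suc n) g"
| rstep: "reach G S n g \<Longrightarrow> s \<in> S \<Longrightarrow> reach G S (Suc n) (g \<otimes>\<^bsub>G\<^esub> s)"

lemma pmf_bind_ge:
  assumes "finite (set_pmf M)"
  shows "pmf M x * pmf (f x) y \<le> pmf (bind_pmf M f) y"
proof -
  have "pmf (bind_pmf M f) y = (\<Sum>a\<in>insert x (set_pmf M). pmf (f a) y * pmf M a)"
    unfolding pmf_bind by (rule integral_measure_pmf_real) (use assms in auto)
  also have "\<dots> \<ge> pmf (f x) y * pmf M x"
    by (rule member_le_sum) (use assms in auto)
  finally show ?thesis by (simp add: mult.commute)
qed

lemma finite_walk: "finite S \<Longrightarrow> S \<noteq> {} \<Longrightarrow> finite (set_pmf (lazy_walk G S n))"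
  by (induction n) (auto simp: lazy_step_def set_pmf_of_set)

lemma step_stay: "1/2 \<le> pmf (lazy_step G S x) x"
proof -
  have "pmf (bernoulli_pmf (1/2)) True * pmf ((\<lambda>b. if b then return_pmf x else map_pmf (\<lambda>s. x \<otimes>\<^bsub>G\<^esub> s) (pmf_of_set S)) True) x
      \<le> pmf (lazy_step G S x) x"
    unfolding lazy_step_def by (rule pmf_bind_ge) auto
  then show ?thesis by simp
qed

lemma step_move:
  assumes "finite S" "S \<noteq> {}" "s \<in> S"
  shows "1/(2*real (card S)) \<le> pmf (lazy_step G S x) (x \<otimes>\<^bsub>G\<^esub> s)"
proof -
  have "pmf (bernoulli_pmf (1/2)) False * pmf ((\<lambda>b. if b then return_pmf x else map_pmf (\<lambda>s. x \<otimes>\<^bsub>G\<^esub> s) (pmf_of_set S)) False) (x \<otimes>\<^bsub>G\<^esub> s)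
      \<le> pmf (lazy_step G S x) (x \<otimes>\<^bsub>G\<^esub> s)"
    unfolding lazy_step_def by (rule pmf_bind_ge) auto
  moreover have "pmf (pmf_of_set S) s \<le> pmf (map_pmf (\<lambda>s. x \<otimes>\<^bsub>G\<^esub> s) (pmf_of_set S)) (x \<otimes>\<^bsub>G\<^esub> s)"
    unfolding pmf_map by (subst measure_pmf_single[symmetric]) (rule measure_pmf.finite_measure_mono, auto)
  ultimately show ?thesis using assms by simp
qed

lemma walk_ge:
  assumes "finite S" "S \<noteq> {}" "reach G S n g"
  shows "(1/(2*real (card S)))^n \<le> pmf (lazy_walk G S n) g"
  using assms(3)
proof induction
  case r0
  then show ?case by simp
next
  case (rstay n g)
  have c: "1/(2*real (card S)) \<le> (1/2::real)" using assms by (simp add: card_gt_0_iff Suc_le_eq)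
  have "(1/(2*real (card S)))^Suc n = (1/(2*real (card S))) * (1/(2*real (card S)))^n" by simp
  also have "\<dots> \<le> 1/2 * pmf (lazy_walk G S n) g"
    by (rule mult_mono) (use c rstay in auto)
  also have "\<dots> \<le> pmf (lazy_walk G S n) g * pmf (lazy_step G S g) g"
    using mult_right_mono[OF step_stay[of G S g] pmf_nonneg[of "lazy_walk G S n" g]] by (simp add: mult.commute)
  also have "\<dots> \<le> pmf (lazy_walk G S (Suc n)) g"
    by (simp add: pmf_bind_ge finite_walk assms)
  finally show ?case .
next
  case (rstep n g s)
  have "(1/(2*real (card S)))^Suc n = (1/(2*real (card S))) * (1/(2*real (card S)))^n" by simp
  also have "\<dots> \<le> pmf (lazy_step G S g) (g \<otimes>\<^bsub>G\<^esub> s) * pmf (lazy_walk G S n) g"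
    by (rule mult_mono) (use step_move[OF assms(1,2) rstep(2)] rstep in auto)
  also have "\<dots> \<le> pmf (lazy_walk G S (Suc n)) (g \<otimes>\<^bsub>G\<^esub> s)"
    using pmf_bind_ge[OF finite_walk[OF assms(1,2)], of G n g "lazy_step G S" "g \<otimes>\<^bsub>G\<^esub> s"]
    by (simp add: mult.commute)
  finally show ?case .
qed

lemma expect_ge:
  assumes "finite S" "S \<noteq> {}"
  shows "pmf (lazy_walk G S n) g * real (f g) \<le> measure_pmf.expectation (lazy_walk G S n) (\<lambda>x. real (f x))"
proof -
  have "measure_pmf.expectation (lazy_walk G S n) (\<lambda>x. real (f x)) = (\<Sum>a\<in>insert g (set_pmf (lazy_walk G S n)). real (f a) * pmf (lazy_walk G S n) a)"
    by (rule integral_measure_pmf_real) (use assms finite_walk[of S G n] in auto)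
  also have "\<dots> \<ge> real (f g) * pmf (lazy_walk G S n) g"
    by (rule member_le_sum) (use assms finite_walk[of S G n] in auto)
  finally show ?thesis by (simp add: mult.commute)
qed

lemma reach_gen:
  assumes "group G" "S \<subseteq> carrier G" "reach G S n g"
  shows "g \<in> generate G S"
  using assms(3)
proof induction
  case r0 then show ?case by (rule generate.one)
next
  case (rstay n g) then show ?case by simp
next
  case (rstep n g s) then show ?case by (simp add: generate.eng generate.incl)
qed

lemma reach_carrier:
  assumes "group G" "S \<subseteq> carrier G" "reach G S n g"
  shows "g \<in> carrier G"
  using reach_gen[OF assms] group.generate_incl[OF assms(1,2)] by blast

lemma reach_mono: "reach G S n g \<Longrightarrow> n \<le> m \<Longrightarrow> reach G S m g"
proof (induction m)
  case 0 then show ?case by simp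
next
  case (Suc m) then show ?case
    by (metis le_Suc_eq reach.rstay)
qed

lemma index_ge_prime:
  assumes grp: "group G" and N: "N \<lhd> G" "finite (rcosets\<^bsub>G\<^esub> N)"
    and g: "g \<in> carrier G" "g \<notin> N" "g [^]\<^bsub>G\<^esub> p = \<one>\<^bsub>G\<^esub>" "Factorial_Ring.prime (p::nat)"
  shows "p \<le> card (rcosets\<^bsub>G\<^esub> N)"
proof -
  interpret N: normal N G by fact
  interpret K: group "G Mod N" by (rule N.factorgroup_is_group)
  have hom: "(\<lambda>a. N #>\<^bsub>G\<^esub> a) \<in> hom G (G Mod N)" by (rule N.r_coset_hom_Mod)
  let ?x = "N #>\<^bsub>G\<^esub> g"
  have xc: "?x \<in> carrier (G Mod N)" using g hom by (auto simp: hom_def)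
  have "?x [^]\<^bsub>G Mod N\<^esub> p = N #>\<^bsub>G\<^esub> (g [^]\<^bsub>G\<^esub> p)"
    using hom_nat_pow[OF hom g(1) grp K.is_group] by simp
  also have "\<dots> = N" using g(3) N.subset by (simp add: group.coset_mult_one[OF grp])
  finally have xp: "?x [^]\<^bsub>G Mod N\<^esub> p = \<one>\<^bsub>G Mod N\<^esub>" by simp
  have xn1: "?x \<noteq> \<one>\<^bsub>G Mod N\<^esub>"
  proof
    assume "?x = \<one>\<^bsub>G Mod N\<^esub>"
    then have "?x = N" by simp
    moreover have "g \<in> ?x" using N.rcos_self[OF g(1)] N.subgroup_axioms by blast
    ultimately show False using g(2) by simp
  qed
  have "K.ord ?x dvd p" using K.pow_eq_id[OF xc] xp by simp
  moreover have "K.ord ?x \<noteq> 1"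
  proof
    assume "K.ord ?x = 1"
    then have "?x [^]\<^bsub>G Mod N\<^esub> (1::nat) = \<one>\<^bsub>G Mod N\<^esub>" using K.pow_eq_id[OF xc, of 1] by auto
    moreover have "?x [^]\<^bsub>G Mod N\<^esub> (1::nat) = ?x" by (rule K.nat_pow_eone[OF xc])
    ultimately show False using xn1 by argo
  qed
  ultimately have op: "K.ord ?x = p" using g(4) unfolding prime_nat_iff by blast
  have "K.ord ?x dvd Coset.order (G Mod N)" by (rule K.ord_dvd_group_order[OF xc])
  then have "p dvd card (rcosets\<^bsub>G\<^esub> N)" using op by (simp add: Coset.order_def FactGroup_def)
  moreover have "card (rcosets\<^bsub>G\<^esub> N) > 0"
    using N(2) xc by (auto simp: FactGroup_def card_gt_0_iff)
  ultimately show ?thesis by (simp add: dvd_imp_le)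
qed

lemma D_ge_prime:
  assumes grp: "group G" and ex: "\<exists>N. finite_index_normal G N \<and> g \<notin> N"
    and g: "g \<in> carrier G" "g \<noteq> \<one>\<^bsub>G\<^esub>" "g [^]\<^bsub>G\<^esub> p = \<one>\<^bsub>G\<^esub>" "Factorial_Ring.prime (p::nat)"
  shows "p \<le> D_G G g"
proof -
  let ?P = "\<lambda>n. \<exists>N. finite_index_normal G N \<and> g \<notin> N \<and> grp_index G N = n"
  have "\<exists>n. ?P n" using ex by blast
  then have "?P (LEAST n. ?P n)" by (rule LeastI_ex)
  then obtain N where N: "finite_index_normal G N" "g \<notin> N" "grp_index G N = (LEAST n. ?P n)" by blast
  have "p \<le> grp_index G N"
    unfolding grp_index_def
    by (rule index_ge_prime[OF grp _ _ g(1) N(2) g(3,4)]) (use N(1) in \<open>auto simp: finite_index_normal_def\<close>)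
  then show ?thesis using N(3) g(2) by (simp add: D_G_def)
qed

lemma lambda_index_ge:
  assumes grp: "group G" and z: "z \<in> carrier G"
    and ZQ: "\<forall>r\<ge>1. \<exists>N. N \<lhd> G \<and> finite (rcosets\<^bsub>G\<^esub> N) \<and> card (rcosets\<^bsub>G\<^esub> N) \<le> r \<and> (\<forall>i::nat. z [^]\<^bsub>G\<^esub> i \<in> N \<longleftrightarrow> r dvd i)"
    and k: "k \<ge> 2"
  shows "1 / real (grp_index G (Lambda G k)) \<le> 1 / (real k * real (k - 1))"
proof -
  interpret G: group G by fact
  let ?L = "Lambda G k"
  obtain N1 where N1: "N1 \<lhd> G" "finite (rcosets\<^bsub>G\<^esub> N1)" "card (rcosets\<^bsub>G\<^esub> N1) \<le> k" "\<forall>i::nat. z [^]\<^bsub>G\<^esub> i \<in> N1 \<longleftrightarrow> k dvd i"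
  proof -
    have "k \<ge> 1" using k by simp
    then show ?thesis using ZQ that by blast
  qed
  obtain N2 where N2: "N2 \<lhd> G" "finite (rcosets\<^bsub>G\<^esub> N2)" "card (rcosets\<^bsub>G\<^esub> N2) \<le> k - 1" "\<forall>i::nat. z [^]\<^bsub>G\<^esub> i \<in> N2 \<longleftrightarrow> (k - 1) dvd i"
  proof -
    have "k - 1 \<ge> 1" using k by simp
    then show ?thesis using ZQ that by blast
  qed
  have LN1: "?L \<subseteq> N1" using N1 unfolding Lambda_def finite_index_normal_def grp_index_def by blast
  have LN2: "?L \<subseteq> N2" using N2 k unfolding Lambda_def finite_index_normal_def grp_index_def by force
  have one: "\<one>\<^bsub>G\<^esub> \<in> ?L" unfolding Lambda_def finite_index_normal_def
    by (auto intro: subgroup.one_closed normal.axioms(1))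
  have Lc: "?L \<subseteq> carrier G" unfolding Lambda_def by blast
  define m where "m = k * (k - 1)"
  have inj: "inj_on (\<lambda>i. ?L #>\<^bsub>G\<^esub> (z [^]\<^bsub>G\<^esub> i)) {..<m}"
  proof (rule inj_onI, rule ccontr)
    fix i j assume ij: "i \<in> {..<m}" "j \<in> {..<m}" "?L #>\<^bsub>G\<^esub> (z [^]\<^bsub>G\<^esub> i) = ?L #>\<^bsub>G\<^esub> (z [^]\<^bsub>G\<^esub> j)" "i \<noteq> j"
    have key: "\<And>a b. a < b \<Longrightarrow> b < m \<Longrightarrow> ?L #>\<^bsub>G\<^esub> (z [^]\<^bsub>G\<^esub> a) = ?L #>\<^bsub>G\<^esub> (z [^]\<^bsub>G\<^esub> b) \<Longrightarrow> False"
    proof -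
      fix a b assume ab: "a < b" "b < m" "?L #>\<^bsub>G\<^esub> (z [^]\<^bsub>G\<^esub> a) = ?L #>\<^bsub>G\<^esub> (z [^]\<^bsub>G\<^esub> b)"
      have "z [^]\<^bsub>G\<^esub> b \<in> ?L #>\<^bsub>G\<^esub> (z [^]\<^bsub>G\<^esub> b)"
        using one z unfolding r_coset_def by force
      then obtain l where l: "l \<in> ?L" "z [^]\<^bsub>G\<^esub> b = l \<otimes>\<^bsub>G\<^esub> z [^]\<^bsub>G\<^esub> a"
        using ab(3) unfolding r_coset_def by auto
      have "z [^]\<^bsub>G\<^esub> b = z [^]\<^bsub>G\<^esub> (b - a) \<otimes>\<^bsub>G\<^esub> z [^]\<^bsub>G\<^esub> a"
        using ab(1) z by (simp add: G.nat_pow_mult)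
      then have "l = z [^]\<^bsub>G\<^esub> (b - a)" using l Lc z
        by (metis G.nat_pow_closed G.r_cancel subsetD)
      then have "z [^]\<^bsub>G\<^esub> (b - a) \<in> N1" "z [^]\<^bsub>G\<^esub> (b - a) \<in> N2" using l LN1 LN2 by auto
      then have "k dvd (b - a)" "(k - 1) dvd (b - a)" using N1(4) N2(4) by auto
      moreover have "coprime k (k - 1)"
      proof -
        have "Suc (k - 1) = k" using k by simp
        then show ?thesis using coprime_Suc_left_nat[of "k - 1"] by simp
      qed
      ultimately have "m dvd (b - a)" unfolding m_def by (rule divides_mult)
      then have "m \<le> b - a" by (rule dvd_imp_le) (use ab in simp)
      then show False using ab by linarith
    qed
    show False
    proof (cases "i < j")
      case True then show ?thesis using key ij by blast
    next
      case False then show ?thesis using key[of j i] ij by auto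
    qed
  qed
  have img: "(\<lambda>i. ?L #>\<^bsub>G\<^esub> (z [^]\<^bsub>G\<^esub> i)) ` {..<m} \<subseteq> rcosets\<^bsub>G\<^esub> ?L"
    using z unfolding RCOSETS_def by auto
  show ?thesis
  proof (cases "finite (rcosets\<^bsub>G\<^esub> ?L)")
    case True
    have "m \<le> card (rcosets\<^bsub>G\<^esub> ?L)"
      using card_mono[OF True img] card_image[OF inj] by simp
    moreover have "m > 0" using k unfolding m_def by simp
    ultimately have le: "real k * real (k - 1) \<le> real (card (rcosets\<^bsub>G\<^esub> ?L))"
      unfolding m_def by (metis of_nat_le_iff of_nat_mult)
    have pos: "0 < real k * real (k - 1)" using k by simp
    have "1 / real (card (rcosets\<^bsub>G\<^esub> ?L)) \<le> 1 / (real k * real (k - 1))"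
    proof (rule divide_left_mono[OF le])
      have "0 < real (card (rcosets\<^bsub>G\<^esub> ?L))" using pos le by linarith
      then show "0 < real (card (rcosets\<^bsub>G\<^esub> ?L)) * (real k * real (k - 1))" using pos by (rule mult_pos_pos)
    qed simp
    then show ?thesis unfolding grp_index_def .
  next
    case False
    then show ?thesis unfolding grp_index_def using k by simp
  qed
qed

definition ellen :: "nat \<Rightarrow> nat" where "ellen k = 4 * 2^k + 4"
definition Fb :: "nat \<Rightarrow> nat" where "Fb l = l * 14^l"

lemma Fb_mono: "l \<le> l' \<Longrightarrow> Fb l \<le> Fb l'"
  unfolding Fb_def by (intro mult_le_mono power_increasing) auto

lemma ex_k: "n \<ge> 8 \<Longrightarrow> \<exists>k. ellen k \<le> n \<and> n < ellen (Suc k)"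
proof -
  assume n: "n \<ge> 8"
  define m where "m = (n - 4) div 4"
  have "m \<ge> 1" using n unfolding m_def by simp
  then obtain k where k: "2^k \<le> m" "m < 2^(k+1)" using ex_power_ivl1[of 2 m] by auto
  have "ellen k \<le> n" using k(1) n unfolding ellen_def m_def by linarith
  moreover have "n < ellen (Suc k)" using k(2) n unfolding ellen_def m_def by simp
  ultimately show ?thesis by blast
qed

lemma summable_part:
  assumes grp: "group G" and z: "z \<in> carrier G"
    and ZQ: "\<forall>r\<ge>1. \<exists>N. N \<lhd> G \<and> finite (rcosets\<^bsub>G\<^esub> N) \<and> card (rcosets\<^bsub>G\<^esub> N) \<le> r \<and> (\<forall>i::nat. z [^]\<^bsub>G\<^esub> i \<in> N \<longleftrightarrow> r dvd i)"
  shows "summable (\<lambda>k. 1 / real (grp_index G (Lambda G (k + 2))))"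
proof (rule summable_comparison_test')
  show "summable (\<lambda>k. inverse (real (Suc k) ^ 2))"
    using summable_ignore_initial_segment[OF inverse_power_summable[of 2, where 'a=real], of 1]
    by (simp add: add.commute)
  fix k :: nat
  have "1 / real (grp_index G (Lambda G (k + 2))) \<le> 1 / (real (k+2) * real (k + 2 - 1))"
    by (rule lambda_index_ge[OF grp z ZQ]) simp
  also have "\<dots> \<le> inverse (real (Suc k) ^ 2)"
    by (simp add: power2_eq_square divide_simps)
  finally show "norm (1 / real (grp_index G (Lambda G (k + 2)))) \<le> inverse (real (Suc k) ^ 2)"
    by simp
qed

lemma abstract_main:
  fixes G :: "('a,'b) monoid_scheme"
  assumes grp: "group G"
    and S: "finite S" "S \<noteq> {}" "S \<subseteq> carrier G" "\<forall>s\<in>S. inv\<^bsub>G\<^esub> s \<in> S" "card S \<le> 7"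
    and reachall: "\<forall>g\<in>carrier G. \<exists>n. reach G S n g"
    and RF: "\<forall>g\<in>carrier G. g \<noteq> \<one>\<^bsub>G\<^esub> \<longrightarrow> (\<exists>N. N \<lhd> G \<and> finite (rcosets\<^bsub>G\<^esub> N) \<and> g \<notin> N)"
    and TOR: "\<forall>k. \<exists>g p. reach G S (ellen k) g \<and> g \<noteq> \<one>\<^bsub>G\<^esub> \<and> Factorial_Ring.prime (p::nat) \<and> g [^]\<^bsub>G\<^esub> p = \<one>\<^bsub>G\<^esub> \<and> Fb (ellen (Suc k)) \<le> p"
    and ZQ: "\<exists>z\<in>carrier G. \<forall>r\<ge>1. \<exists>N. N \<lhd> G \<and> finite (rcosets\<^bsub>G\<^esub> N) \<and> card (rcosets\<^bsub>G\<^esub> N) \<le> r \<and> (\<forall>i::nat. z [^]\<^bsub>G\<^esub> i \<in> N \<longleftrightarrow> r dvd i)"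
  shows "group G \<and> finitely_generated G \<and> residually_finite G \<and> symmetric_gen_set G S \<and>
    filterlim (\<lambda>n. measure_pmf.expectation (lazy_walk G S n) (\<lambda>x. real (D_G G x))) at_top sequentially \<and>
    summable (\<lambda>k. 1 / real (grp_index G (Lambda G (k + 2))))"
proof -
  have gen: "generate G S = carrier G"
  proof
    show "generate G S \<subseteq> carrier G" by (rule group.generate_incl[OF grp S(3)])
    show "carrier G \<subseteq> generate G S" using reachall reach_gen[OF grp S(3)] by blast
  qed
  have fg: "finitely_generated G" unfolding finitely_generated_def using S gen by blast
  have rf: "residually_finite G" unfolding residually_finite_def finite_index_normal_def using RF by blast
  have sym: "symmetric_gen_set G S" unfolding symmetric_gen_set_def using S gen by blast
  have lim: "filterlim (\<lambda>n. measure_pmf.expectation (lazy_walk G S n) (\<lambda>x. real (D_G G x))) at_top sequentially"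
  proof (rule filterlim_at_top_mono[OF filterlim_real_sequentially])
    show "\<forall>\<^sub>F n in sequentially. real n \<le> measure_pmf.expectation (lazy_walk G S n) (\<lambda>x. real (D_G G x))"
      unfolding eventually_sequentially
    proof (intro exI allI impI)
      fix n :: nat assume n: "8 \<le> n"
      obtain k where k: "ellen k \<le> n" "n < ellen (Suc k)" using ex_k[OF n] by blast
      obtain g p where gp: "reach G S (ellen k) g" "g \<noteq> \<one>\<^bsub>G\<^esub>" "Factorial_Ring.prime (p::nat)"
          "g [^]\<^bsub>G\<^esub> p = \<one>\<^bsub>G\<^esub>" "Fb (ellen (Suc k)) \<le> p"
        using TOR by blast
      have rn: "reach G S n g" using reach_mono[OF gp(1) k(1)] .
      have gc: "g \<in> carrier G" using reach_carrier[OF grp S(3) gp(1)] .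
      have Dp: "p \<le> D_G G g"
        by (rule D_ge_prime[OF grp _ gc gp(2) gp(4) gp(3)]) (use RF gc gp(2) in \<open>auto simp: finite_index_normal_def\<close>)
      have c14: "(1/14::real)^n \<le> (1/(2*real (card S)))^n"
      proof (rule power_mono)
        have "card S \<ge> 1" using S by (simp add: card_gt_0_iff Suc_le_eq)
        then show "1/14 \<le> 1/(2*real (card S))" using S(5) by (simp add: divide_simps)
      qed simp
      have "real n \<le> real (Fb (ellen (Suc k))) * (1/14)^n"
      proof -
        have "Fb n \<le> Fb (ellen (Suc k))" using Fb_mono k(2) by simp
        then have "real (Fb n) \<le> real (Fb (ellen (Suc k)))" by linarith
        moreover have "real (Fb n) * (1/14)^n = real n" unfolding Fb_def
          by (simp add: power_one_over field_simps)
        ultimately show ?thesis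
          by (metis mult_right_mono zero_le_divide_1_iff zero_le_numeral zero_le_power)
      qed
      also have "\<dots> \<le> real (D_G G g) * (1/(2*real (card S)))^n"
        by (rule mult_mono) (use Dp c14 gp(5) in auto)
      also have "\<dots> \<le> pmf (lazy_walk G S n) g * real (D_G G g)"
        using walk_ge[OF S(1,2) rn] by (simp add: mult.commute mult_left_mono)
      also have "\<dots> \<le> measure_pmf.expectation (lazy_walk G S n) (\<lambda>x. real (D_G G x))"
        by (rule expect_ge[OF S(1,2)])
      finally show "real n \<le> measure_pmf.expectation (lazy_walk G S n) (\<lambda>x. real (D_G G x))" .
    qed
  qed
  obtain z where z: "z \<in> carrier G" "\<forall>r\<ge>1. \<exists>N. N \<lhd> G \<and> finite (rcosets\<^bsub>G\<^esub> N) \<and> card (rcosets\<^bsub>G\<^esub> N) \<le> r \<and> (\<forall>i::nat. z [^]\<^bsub>G\<^esub> i \<in> N \<longleftrightarrow> r dvd i)"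
    using ZQ by blast
  show ?thesis using grp fg rf sym lim summable_part[OF grp z] by blast
qed

lemma transfer_nat:
  fixes H :: "'b monoid"
  assumes grp: "group H" and cnt: "countable (carrier H)"
    and S: "finite S" "S \<noteq> {}" "S \<subseteq> carrier H" "\<forall>s\<in>S. inv\<^bsub>H\<^esub> s \<in> S" "card S \<le> 7"
    and reachall: "\<forall>g\<in>carrier H. \<exists>n. reach H S n g"
    and RF: "\<forall>g\<in>carrier H. g \<noteq> \<one>\<^bsub>H\<^esub> \<longrightarrow> (\<exists>N. N \<lhd> H \<and> finite (rcosets\<^bsub>H\<^esub> N) \<and> g \<notin> N)"
    and TOR: "\<forall>k. \<exists>g p. reach H S (ellen k) g \<and> g \<noteq> \<one>\<^bsub>H\<^esub> \<and> Factorial_Ring.prime (p::nat) \<and> g [^]\<^bsub>H\<^esub> p = \<one>\<^bsub>H\<^esub> \<and> Fb (ellen (Suc k)) \<le> p"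
    and ZQ: "\<exists>z\<in>carrier H. \<forall>r\<ge>1. \<exists>N. N \<lhd> H \<and> finite (rcosets\<^bsub>H\<^esub> N) \<and> card (rcosets\<^bsub>H\<^esub> N) \<le> r \<and> (\<forall>i::nat. z [^]\<^bsub>H\<^esub> i \<in> N \<longleftrightarrow> r dvd i)"
  shows "\<exists>(G :: nat monoid) S.
    group G \<and> finitely_generated G \<and> residually_finite G \<and> symmetric_gen_set G S \<and>
    filterlim (\<lambda>n. measure_pmf.expectation (lazy_walk G S n) (\<lambda>x. real (D_G G x))) at_top sequentially \<and>
    summable (\<lambda>k. 1 / real (grp_index G (Lambda G (k + 2))))"
proof -
  interpret H: group H by fact
  define C where "C = carrier H"
  define f where "f = to_nat_on C"
  define g where "g = inv_into C f"
  have inj: "inj_on f C" unfolding f_def using cnt C_def by (simp add: inj_on_to_nat_on)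
  have gf[simp]: "\<And>x. x \<in> C \<Longrightarrow> g (f x) = x" unfolding g_def using inj by simp
  define G :: "nat monoid" where "G = \<lparr>carrier = f ` C, monoid.mult = (\<lambda>x y. f (g x \<otimes>\<^bsub>H\<^esub> g y)), one = f \<one>\<^bsub>H\<^esub>\<rparr>"
  have cG: "carrier G = f ` C" and mG: "\<And>x y. x \<otimes>\<^bsub>G\<^esub> y = f (g x \<otimes>\<^bsub>H\<^esub> g y)" and oG: "\<one>\<^bsub>G\<^esub> = f \<one>\<^bsub>H\<^esub>"
    unfolding G_def by simp_all
  have hom: "\<And>x y. x \<in> C \<Longrightarrow> y \<in> C \<Longrightarrow> f x \<otimes>\<^bsub>G\<^esub> f y = f (x \<otimes>\<^bsub>H\<^esub> y)" by (simp add: mG)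
  have Cm: "\<And>x y. x \<in> C \<Longrightarrow> y \<in> C \<Longrightarrow> x \<otimes>\<^bsub>H\<^esub> y \<in> C" unfolding C_def by simp
  have C1: "\<one>\<^bsub>H\<^esub> \<in> C" unfolding C_def by simp
  have Ci: "\<And>x. x \<in> C \<Longrightarrow> inv\<^bsub>H\<^esub> x \<in> C" unfolding C_def by simp
  have grpG: "group G"
  proof (rule groupI)
    fix x y assume "x \<in> carrier G" "y \<in> carrier G"
    then show "x \<otimes>\<^bsub>G\<^esub> y \<in> carrier G" unfolding cG using hom Cm by auto
  next
    show "\<one>\<^bsub>G\<^esub> \<in> carrier G" unfolding cG oG using C1 by simp
  next
    fix x y z assume "x \<in> carrier G" "y \<in> carrier G" "z \<in> carrier G"
    then show "x \<otimes>\<^bsub>G\<^esub> y \<otimes>\<^bsub>G\<^esub> z = x \<otimes>\<^bsub>G\<^esub> (y \<otimes>\<^bsub>G\<^esub> z)"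
      unfolding cG using hom Cm by (auto simp: H.m_assoc C_def)
  next
    fix x assume "x \<in> carrier G"
    then show "\<one>\<^bsub>G\<^esub> \<otimes>\<^bsub>G\<^esub> x = x" unfolding cG oG using hom C1 by (auto simp: C_def)
  next
    fix x assume "x \<in> carrier G"
    then obtain a where a: "a \<in> C" "x = f a" unfolding cG by auto
    then have "f (inv\<^bsub>H\<^esub> a) \<otimes>\<^bsub>G\<^esub> x = \<one>\<^bsub>G\<^esub>" using hom Ci by (simp add: oG C_def)
    then show "\<exists>y\<in>carrier G. y \<otimes>\<^bsub>G\<^esub> x = \<one>\<^bsub>G\<^esub>" using Ci a unfolding cG by blast
  qed
  interpret G: group G by (rule grpG)
  have finv: "\<And>a. a \<in> C \<Longrightarrow> inv\<^bsub>G\<^esub> (f a) = f (inv\<^bsub>H\<^esub> a)"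
    by (rule G.inv_equality) (auto simp: hom Ci oG cG C_def)
  have fpow: "\<And>a n. a \<in> C \<Longrightarrow> f (a [^]\<^bsub>H\<^esub> (n::nat)) = f a [^]\<^bsub>G\<^esub> n"
  proof -
    fix a and n :: nat assume a: "a \<in> C"
    show "f (a [^]\<^bsub>H\<^esub> n) = f a [^]\<^bsub>G\<^esub> n"
      by (induction n) (use a in \<open>simp_all add: oG hom[symmetric] C_def\<close>)
  qed
  have f1: "\<And>a. a \<in> C \<Longrightarrow> f a = \<one>\<^bsub>G\<^esub> \<longleftrightarrow> a = \<one>\<^bsub>H\<^esub>"
    using inj C1 unfolding oG by (meson inj_on_eq_iff)
  define S' where "S' = f ` S"
  have reachT: "\<And>n x. reach H S n x \<Longrightarrow> reach G S' n (f x)"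
  proof -
    fix n x assume "reach H S n x"
    then show "reach G S' n (f x)"
    proof induction
      case r0 then show ?case using reach.r0[of G S'] by (simp add: oG)
    next
      case (rstay n x) then show ?case by (simp add: reach.rstay)
    next
      case (rstep n x s)
      have "x \<in> C" using reach_carrier[OF grp S(3) rstep(1)] C_def by simp
      moreover have "s \<in> C" using rstep S(3) C_def by auto
      ultimately have "f (x \<otimes>\<^bsub>H\<^esub> s) = f x \<otimes>\<^bsub>G\<^esub> f s" by (simp add: hom)
      then show ?case using reach.rstep[OF rstep(3), of "f s"] rstep(2) S'_def by simp
    qed
  qed
  have normT: "\<And>N. N \<lhd> H \<Longrightarrow> f ` N \<lhd> G"
  proof -
    fix N assume N: "N \<lhd> H"
    interpret N: normal N H by fact
    have NC: "N \<subseteq> C" using N.subset C_def by simp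
    have sub: "subgroup (f ` N) G"
    proof (rule G.subgroupI)
      show "f ` N \<subseteq> carrier G" using NC cG by auto
      show "f ` N \<noteq> {}" using N.one_closed by blast
      fix a assume "a \<in> f ` N"
      then obtain x where "x \<in> N" "a = f x" by auto
      then show "inv\<^bsub>G\<^esub> a \<in> f ` N" using finv NC by auto
    next
      fix a b assume "a \<in> f ` N" "b \<in> f ` N"
      then show "a \<otimes>\<^bsub>G\<^esub> b \<in> f ` N" using hom NC by auto
    qed
    show "f ` N \<lhd> G"
    proof (rule G.normal_invI[OF sub])
      fix x h assume "x \<in> carrier G" "h \<in> f ` N"
      then obtain a n where an: "a \<in> C" "x = f a" "n \<in> N" "h = f n" unfolding cG by auto
      have "x \<otimes>\<^bsub>G\<^esub> h \<otimes>\<^bsub>G\<^esub> inv\<^bsub>G\<^esub> x = f (a \<otimes>\<^bsub>H\<^esub> n \<otimes>\<^bsub>H\<^esub> inv\<^bsub>H\<^esub> a)"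
        using an NC by (simp add: finv hom Cm Ci subsetD)
      moreover have "a \<otimes>\<^bsub>H\<^esub> n \<otimes>\<^bsub>H\<^esub> inv\<^bsub>H\<^esub> a \<in> N" using an C_def by (simp add: N.inv_op_closed2)
      ultimately show "x \<otimes>\<^bsub>G\<^esub> h \<otimes>\<^bsub>G\<^esub> inv\<^bsub>G\<^esub> x \<in> f ` N" by simp
    qed
  qed
  have rcosT: "\<And>N. N \<subseteq> C \<Longrightarrow> rcosets\<^bsub>G\<^esub> (f ` N) = (\<lambda>U. f ` U) ` (rcosets\<^bsub>H\<^esub> N)"
  proof -
    fix N assume NC: "N \<subseteq> C"
    have e: "\<And>a. a \<in> C \<Longrightarrow> (f ` N) #>\<^bsub>G\<^esub> (f a) = f ` (N #>\<^bsub>H\<^esub> a)"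
      unfolding r_coset_def using NC by (auto simp: hom subsetD)
    show "rcosets\<^bsub>G\<^esub> (f ` N) = (\<lambda>U. f ` U) ` (rcosets\<^bsub>H\<^esub> N)"
      unfolding RCOSETS_def cG using e C_def by auto
  qed
  have injP: "\<And>N. N \<subseteq> C \<Longrightarrow> inj_on (\<lambda>U. f ` U) (rcosets\<^bsub>H\<^esub> N)"
  proof -
    fix N assume NC: "N \<subseteq> C"
    have "rcosets\<^bsub>H\<^esub> N \<subseteq> Pow C" using NC H.r_coset_subset_G unfolding C_def RCOSETS_def by auto
    then show "inj_on (\<lambda>U. f ` U) (rcosets\<^bsub>H\<^esub> N)" using inj_on_image_Pow[OF inj] inj_on_subset by blast
  qed
  have finT: "\<And>N. N \<subseteq> C \<Longrightarrow> finite (rcosets\<^bsub>H\<^esub> N) \<Longrightarrow> finite (rcosets\<^bsub>G\<^esub> (f ` N)) \<and> card (rcosets\<^bsub>G\<^esub> (f ` N)) = card (rcosets\<^bsub>H\<^esub> N)"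
    using rcosT injP by (simp add: card_image)
  have memT: "\<And>N a. N \<subseteq> C \<Longrightarrow> a \<in> C \<Longrightarrow> f a \<in> f ` N \<longleftrightarrow> a \<in> N"
    using inj by (meson inj_on_image_mem_iff)
  show ?thesis
  proof (intro exI[of _ G] exI[of _ S'] abstract_main[OF grpG])
    show "finite S'" "S' \<noteq> {}" using S S'_def by auto
    show "S' \<subseteq> carrier G" using S S'_def cG C_def by auto
    show "\<forall>s\<in>S'. inv\<^bsub>G\<^esub> s \<in> S'" using S S'_def finv C_def by auto
    show "card S' \<le> 7" using S S'_def card_image_le le_trans by blast
    show "\<forall>g\<in>carrier G. \<exists>n. reach G S' n g"
    proof
      fix x assume "x \<in> carrier G"
      then obtain a where "a \<in> carrier H" "x = f a" using cG C_def by auto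
      then show "\<exists>n. reach G S' n x" using reachall reachT by blast
    qed
    show "\<forall>x\<in>carrier G. x \<noteq> \<one>\<^bsub>G\<^esub> \<longrightarrow> (\<exists>N. N \<lhd> G \<and> finite (rcosets\<^bsub>G\<^esub> N) \<and> x \<notin> N)"
    proof (intro ballI impI)
      fix x assume "x \<in> carrier G" "x \<noteq> \<one>\<^bsub>G\<^esub>"
      then obtain a where a: "a \<in> C" "x = f a" "a \<noteq> \<one>\<^bsub>H\<^esub>" unfolding cG using f1 by auto
      then obtain N where N: "N \<lhd> H" "finite (rcosets\<^bsub>H\<^esub> N)" "a \<notin> N" using RF C_def by auto
      have NC: "N \<subseteq> C" using N(1) normal.axioms(1) subgroup.subset C_def by blast
      show "\<exists>N. N \<lhd> G \<and> finite (rcosets\<^bsub>G\<^esub> N) \<and> x \<notin> N"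
        using normT[OF N(1)] finT[OF NC N(2)] memT[OF NC a(1)] a N by blast
    qed
    show "\<forall>k. \<exists>x p. reach G S' (ellen k) x \<and> x \<noteq> \<one>\<^bsub>G\<^esub> \<and> Factorial_Ring.prime (p::nat) \<and> x [^]\<^bsub>G\<^esub> p = \<one>\<^bsub>G\<^esub> \<and> Fb (ellen (Suc k)) \<le> p"
    proof
      fix k
      obtain x p where xp: "reach H S (ellen k) x" "x \<noteq> \<one>\<^bsub>H\<^esub>" "Factorial_Ring.prime (p::nat)" "x [^]\<^bsub>H\<^esub> p = \<one>\<^bsub>H\<^esub>" "Fb (ellen (Suc k)) \<le> p"
        using TOR by blast
      have xC: "x \<in> C" using reach_carrier[OF grp S(3) xp(1)] C_def by simp
      show "\<exists>x p. reach G S' (ellen k) x \<and> x \<noteq> \<one>\<^bsub>G\<^esub> \<and> Factorial_Ring.prime (p::nat) \<and> x [^]\<^bsub>G\<^esub> p = \<one>\<^bsub>G\<^esub> \<and> Fb (ellen (Suc k)) \<le> p"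
        using reachT[OF xp(1)] f1[OF xC] xp fpow[OF xC, of p] oG by (intro exI[of _ "f x"] exI[of _ p]) auto
    qed
    obtain z where z: "z \<in> carrier H" "\<forall>r\<ge>1. \<exists>N. N \<lhd> H \<and> finite (rcosets\<^bsub>H\<^esub> N) \<and> card (rcosets\<^bsub>H\<^esub> N) \<le> r \<and> (\<forall>i::nat. z [^]\<^bsub>H\<^esub> i \<in> N \<longleftrightarrow> r dvd i)"
      using ZQ by blast
    show "\<exists>z\<in>carrier G. \<forall>r\<ge>1. \<exists>N. N \<lhd> G \<and> finite (rcosets\<^bsub>G\<^esub> N) \<and> card (rcosets\<^bsub>G\<^esub> N) \<le> r \<and> (\<forall>i::nat. z [^]\<^bsub>G\<^esub> i \<in> N \<longleftrightarrow> r dvd i)"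
    proof (intro bexI[of _ "f z"] allI impI)
      show "f z \<in> carrier G" using z cG C_def by simp
      fix r :: nat assume r: "r \<ge> 1"
      then obtain N where N: "N \<lhd> H" "finite (rcosets\<^bsub>H\<^esub> N)" "card (rcosets\<^bsub>H\<^esub> N) \<le> r" "\<forall>i::nat. z [^]\<^bsub>H\<^esub> i \<in> N \<longleftrightarrow> r dvd i"
        using z by blast
      have NC: "N \<subseteq> C" using N(1) normal.axioms(1) subgroup.subset C_def by blast
      have "\<forall>i::nat. f z [^]\<^bsub>G\<^esub> i \<in> f ` N \<longleftrightarrow> r dvd i"
        using fpow[of z] memT[OF NC] N(4) z(1) C_def by (metis H.nat_pow_closed)
      then show "\<exists>N. N \<lhd> G \<and> finite (rcosets\<^bsub>G\<^esub> N) \<and> card (rcosets\<^bsub>G\<^esub> N) \<le> r \<and> (\<forall>i::nat. f z [^]\<^bsub>G\<^esub> i \<in> N \<longleftrightarrow> r dvd i)"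
        using normT[OF N(1)] finT[OF NC N(2)] N by (intro exI[of _ "f ` N"]) auto
    qed
  qed
qed

type_synonym pt = "(nat \<times> int \<times> int) + (nat \<times> int)"

definition mm :: "nat \<Rightarrow> int" where "mm j = 2 ^ Suc j"
definition PP :: "nat \<Rightarrow> nat" where "PP k = (SOME p. Factorial_Ring.prime p \<and> Fb (ellen (Suc k)) < p)"

lemma PP: "Factorial_Ring.prime (PP k)" "Fb (ellen (Suc k)) < PP k"
proof -
  have "\<exists>p. Factorial_Ring.prime p \<and> Fb (ellen (Suc k)) < p" using bigger_prime by blast
  then have "Factorial_Ring.prime (PP k) \<and> Fb (ellen (Suc k)) < PP k" unfolding PP_def by (rule someI_ex)
  then show "Factorial_Ring.prime (PP k)" "Fb (ellen (Suc k)) < PP k" by auto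
qed

lemma PP_gt2: "PP k > 2"
proof -
  have e: "ellen (Suc k) \<ge> 2" by (simp add: ellen_def)
  have "ellen (Suc k) \<le> Fb (ellen (Suc k))" unfolding Fb_def by simp
  then have "Fb (ellen (Suc k)) \<ge> 2" using e by linarith
  then show ?thesis using PP(2)[of k] by linarith
qed

definition XX :: "pt set" where
  "XX = {y. case y of Inl (j,i,x) \<Rightarrow> 0 \<le> i \<and> i < mm j \<and> 0 \<le> x \<and> x < int (PP j)
                   | Inr (r,i) \<Rightarrow> 0 < r \<and> 0 \<le> i \<and> i < int r}"

definition tR :: "int \<Rightarrow> pt \<Rightarrow> pt" where
  "tR c y = (case y of Inl (j,i,x) \<Rightarrow> Inl (j, (i + c) mod mm j, x) | Inr q \<Rightarrow> Inr q)"
definition aR :: "int \<Rightarrow> pt \<Rightarrow> pt" where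
  "aR c y = (case y of Inl (j,i,x) \<Rightarrow> Inl (j, i, if i = 2^j then (x + c) mod int (PP j) else x) | Inr q \<Rightarrow> Inr q)"
definition bR :: "pt \<Rightarrow> pt" where
  "bR y = (case y of Inl (j,i,x) \<Rightarrow> Inl (j, i, if i = 0 then (- x) mod int (PP j) else x) | Inr q \<Rightarrow> Inr q)"
definition zR :: "int \<Rightarrow> pt \<Rightarrow> pt" where
  "zR c y = (case y of Inl q \<Rightarrow> Inl q | Inr (r,i) \<Rightarrow> Inr (r, (i + c) mod int r))"

lemma mm_pos: "mm j > 0" unfolding mm_def by simp
lemma PP_pos: "int (PP j) > 0" using PP_gt2[of j] by simp

lemma XX_Inl: "Inl (j,i,x) \<in> XX \<longleftrightarrow> 0 \<le> i \<and> i < mm j \<and> 0 \<le> x \<and> x < int (PP j)"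
  unfolding XX_def by simp
lemma XX_Inr: "Inr (r,i) \<in> XX \<longleftrightarrow> 0 < r \<and> 0 \<le> i \<and> i < int r"
  unfolding XX_def by simp

lemma XX_cases:
  assumes "y \<in> XX"
  obtains j i x where "y = Inl (j,i,x)" "0 \<le> i" "i < mm j" "0 \<le> x" "x < int (PP j)"
  | r i where "y = Inr (r,i)" "0 < r" "0 \<le> i" "i < int r"
  using assms by (cases y) (auto simp: XX_Inl XX_Inr)

lemma tR_X: "y \<in> XX \<Longrightarrow> tR c y \<in> XX"
  by (erule XX_cases) (auto simp: tR_def XX_Inl XX_Inr mm_pos)
lemma aR_X: "y \<in> XX \<Longrightarrow> aR c y \<in> XX"
  by (erule XX_cases) (auto simp: aR_def XX_Inl XX_Inr PP_pos)
lemma bR_X: "y \<in> XX \<Longrightarrow> bR y \<in> XX"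
  by (erule XX_cases) (auto simp: bR_def XX_Inl XX_Inr PP_pos)
lemma zR_X: "y \<in> XX \<Longrightarrow> zR c y \<in> XX"
  by (erule XX_cases) (auto simp: zR_def XX_Inl XX_Inr)

lemma tR_comp: "y \<in> XX \<Longrightarrow> tR c (tR d y) = tR (d + c) y"
  by (erule XX_cases) (auto simp: tR_def mod_add_left_eq add.assoc)
lemma aR_comp: "y \<in> XX \<Longrightarrow> aR c (aR d y) = aR (d + c) y"
  by (erule XX_cases) (auto simp: aR_def mod_add_left_eq add.assoc)
lemma zR_comp: "y \<in> XX \<Longrightarrow> zR c (zR d y) = zR (d + c) y"
  by (erule XX_cases) (auto simp: zR_def mod_add_left_eq add.assoc)
lemma bR_comp: "y \<in> XX \<Longrightarrow> bR (bR y) = y"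
  by (erule XX_cases) (auto simp: bR_def mod_minus_eq)
lemma tR_0: "y \<in> XX \<Longrightarrow> tR 0 y = y"
  by (erule XX_cases) (auto simp: tR_def)
lemma aR_0: "y \<in> XX \<Longrightarrow> aR 0 y = y"
  by (erule XX_cases) (auto simp: aR_def)
lemma zR_0: "y \<in> XX \<Longrightarrow> zR 0 y = y"
  by (erule XX_cases) (auto simp: zR_def)

lemma restrict_Bij:
  assumes "\<And>y. y \<in> A \<Longrightarrow> u y \<in> A" "\<And>y. y \<in> A \<Longrightarrow> v y \<in> A"
    "\<And>y. y \<in> A \<Longrightarrow> v (u y) = y" "\<And>y. y \<in> A \<Longrightarrow> u (v y) = y"
  shows "restrict u A \<in> Bij A"
proof -
  have "bij_betw u A A" by (rule bij_betwI[of u A A v]) (use assms in auto)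
  moreover have "bij_betw (restrict u A) A A = bij_betw u A A" by (rule bij_betw_cong) simp
  ultimately have "bij_betw (restrict u A) A A" by simp
  then show ?thesis unfolding Bij_def by simp
qed

lemma mult_restrict:
  assumes "restrict u A \<in> Bij A" "restrict v A \<in> Bij A" "\<And>y. y \<in> A \<Longrightarrow> v y \<in> A"
  shows "restrict u A \<otimes>\<^bsub>BijGroup A\<^esub> restrict v A = restrict (\<lambda>y. u (v y)) A"
  using assms unfolding BijGroup_def compose_def by (auto intro!: restrict_ext)

definition "TT c = restrict (tR c) XX"
definition "AA c = restrict (aR c) XX"
definition "BB = restrict bR XX"
definition "ZZ c = restrict (zR c) XX"

lemma TT_Bij: "TT c \<in> Bij XX"
  unfolding TT_def by (rule restrict_Bij[where v="tR (-c)"]) (auto simp: tR_X tR_comp tR_0)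
lemma AA_Bij: "AA c \<in> Bij XX"
  unfolding AA_def by (rule restrict_Bij[where v="aR (-c)"]) (auto simp: aR_X aR_comp aR_0)
lemma ZZ_Bij: "ZZ c \<in> Bij XX"
  unfolding ZZ_def by (rule restrict_Bij[where v="zR (-c)"]) (auto simp: zR_X zR_comp zR_0)
lemma BB_Bij: "BB \<in> Bij XX"
  unfolding BB_def by (rule restrict_Bij[where v="bR"]) (auto simp: bR_X bR_comp)

abbreviation "BX \<equiv> BijGroup XX"

lemma one_BX: "\<one>\<^bsub>BX\<^esub> = restrict id XX" unfolding BijGroup_def by (simp add: id_def)
lemma TT0: "TT 0 = \<one>\<^bsub>BX\<^esub>" unfolding one_BX TT_def by (auto intro!: restrict_ext simp: tR_0)
lemma AA0: "AA 0 = \<one>\<^bsub>BX\<^esub>" unfolding one_BX AA_def by (auto intro!: restrict_ext simp: aR_0)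
lemma ZZ0: "ZZ 0 = \<one>\<^bsub>BX\<^esub>" unfolding one_BX ZZ_def by (auto intro!: restrict_ext simp: zR_0)

lemma TT_mult: "TT c \<otimes>\<^bsub>BX\<^esub> TT d = TT (d + c)"
  using mult_restrict[OF TT_Bij[unfolded TT_def] TT_Bij[unfolded TT_def] tR_X]
  unfolding TT_def by (auto intro!: restrict_ext simp: tR_comp)
lemma AA_mult: "AA c \<otimes>\<^bsub>BX\<^esub> AA d = AA (d + c)"
  using mult_restrict[OF AA_Bij[unfolded AA_def] AA_Bij[unfolded AA_def] aR_X]
  unfolding AA_def by (auto intro!: restrict_ext simp: aR_comp)
lemma ZZ_mult: "ZZ c \<otimes>\<^bsub>BX\<^esub> ZZ d = ZZ (d + c)"
  using mult_restrict[OF ZZ_Bij[unfolded ZZ_def] ZZ_Bij[unfolded ZZ_def] zR_X]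
  unfolding ZZ_def by (auto intro!: restrict_ext simp: zR_comp)
lemma BB_mult: "BB \<otimes>\<^bsub>BX\<^esub> BB = \<one>\<^bsub>BX\<^esub>"
  using mult_restrict[OF BB_Bij[unfolded BB_def] BB_Bij[unfolded BB_def] bR_X]
  unfolding BB_def one_BX by (auto intro!: restrict_ext simp: bR_comp)

lemma grpBX: "group BX" by (rule group_BijGroup)

lemma TT_inv: "inv\<^bsub>BX\<^esub> (TT c) = TT (-c)"
  by (rule group.inv_equality[OF grpBX]) (auto simp: TT_mult TT0[symmetric] TT_Bij BijGroup_def[of XX, THEN arg_cong[where f=carrier], simplified])
lemma AA_inv: "inv\<^bsub>BX\<^esub> (AA c) = AA (-c)"
  by (rule group.inv_equality[OF grpBX]) (auto simp: AA_mult AA0[symmetric] AA_Bij BijGroup_def[of XX, THEN arg_cong[where f=carrier], simplified])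
lemma ZZ_inv: "inv\<^bsub>BX\<^esub> (ZZ c) = ZZ (-c)"
  by (rule group.inv_equality[OF grpBX]) (auto simp: ZZ_mult ZZ0[symmetric] ZZ_Bij BijGroup_def[of XX, THEN arg_cong[where f=carrier], simplified])
lemma BB_inv: "inv\<^bsub>BX\<^esub> BB = BB"
  by (rule group.inv_equality[OF grpBX]) (auto simp: BB_mult BB_Bij BijGroup_def[of XX, THEN arg_cong[where f=carrier], simplified])

lemma TT_pow: "TT c [^]\<^bsub>BX\<^esub> (n::nat) = TT (c * int n)"
  by (induction n) (simp_all add: TT0 TT_mult algebra_simps)
lemma ZZ_pow: "ZZ c [^]\<^bsub>BX\<^esub> (n::nat) = ZZ (c * int n)"
  by (induction n) (simp_all add: ZZ0 ZZ_mult algebra_simps)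

definition "SS = {TT 1, TT (-1), AA 1, AA (-1), BB, ZZ 1, ZZ (-1)}"
definition "HH = BX\<lparr>carrier := generate BX SS\<rparr>"

lemma carrier_BX: "carrier BX = Bij XX" unfolding BijGroup_def by simp

lemma SS_sub: "SS \<subseteq> carrier BX"
  unfolding SS_def carrier_BX using TT_Bij AA_Bij BB_Bij ZZ_Bij by auto

lemma sub_HH: "subgroup (generate BX SS) BX"
  by (rule group.generate_is_subgroup[OF grpBX SS_sub])

lemma grpHH: "group HH"
  unfolding HH_def by (rule subgroup.subgroup_is_group[OF sub_HH grpBX])

lemma HH_simps[simp]: "carrier HH = generate BX SS" "x \<otimes>\<^bsub>HH\<^esub> y = x \<otimes>\<^bsub>BX\<^esub> y" "\<one>\<^bsub>HH\<^esub> = \<one>\<^bsub>BX\<^esub>"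
  unfolding HH_def by simp_all

lemma HH_pow: "x [^]\<^bsub>HH\<^esub> (n::nat) = x [^]\<^bsub>BX\<^esub> n"
  unfolding HH_def by (rule monoid.nat_pow_consistent[symmetric, OF group.is_monoid[OF grpBX]])

lemma HH_inv: "x \<in> carrier HH \<Longrightarrow> inv\<^bsub>HH\<^esub> x = inv\<^bsub>BX\<^esub> x"
  unfolding HH_def using group.m_inv_consistent[OF grpBX sub_HH] by simp

lemma HH_sub: "carrier HH \<subseteq> Bij XX"
  using subgroup.subset[OF sub_HH] carrier_BX by simp

lemma eval_mult: "u \<in> Bij XX \<Longrightarrow> v \<in> Bij XX \<Longrightarrow> y \<in> XX \<Longrightarrow> (u \<otimes>\<^bsub>BX\<^esub> v) y = u (v y)"
  unfolding BijGroup_def compose_def by simp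

lemma Bij_X: "u \<in> Bij XX \<Longrightarrow> y \<in> XX \<Longrightarrow> u y \<in> XX"
  using Bij_imp_funcset by blast

fun blk :: "pt \<Rightarrow> nat + nat" where
  "blk (Inl (j,i,x)) = Inl j"
| "blk (Inr (r,i)) = Inr r"

definition INV :: "(pt \<Rightarrow> pt) \<Rightarrow> bool" where
  "INV h \<longleftrightarrow> h \<in> Bij XX \<and> (\<forall>y\<in>XX. blk (h y) = blk y) \<and>
     (\<forall>r>0. \<exists>c. \<forall>i. 0 \<le> i \<and> i < int r \<longrightarrow> h (Inr (r,i)) = zR c (Inr (r,i)))"

lemma zR_Inr: "0 \<le> i \<Longrightarrow> i < int r \<Longrightarrow> zR 0 (Inr (r,i)) = Inr (r,i)"
  by (simp add: zR_def)

lemma INV_TT: "INV (TT c)"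
  unfolding INV_def TT_def using TT_Bij[of c]
  by (auto simp: TT_def XX_Inr tR_def zR_def elim!: XX_cases intro!: exI[of _ 0])
lemma INV_AA: "INV (AA c)"
  unfolding INV_def AA_def using AA_Bij[of c]
  by (auto simp: AA_def XX_Inr aR_def zR_def elim!: XX_cases intro!: exI[of _ 0])
lemma INV_BB: "INV BB"
  unfolding INV_def BB_def using BB_Bij
  by (auto simp: BB_def XX_Inr bR_def zR_def elim!: XX_cases intro!: exI[of _ 0])
lemma INV_ZZ: "INV (ZZ c)"
  unfolding INV_def ZZ_def using ZZ_Bij[of c]
  by (auto simp: ZZ_def XX_Inr zR_def elim!: XX_cases intro!: exI[of _ c])

lemma INV_one: "INV \<one>\<^bsub>BX\<^esub>"
  using INV_ZZ[of 0] by (simp add: ZZ0)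

lemma INV_mult:
  assumes "INV u" "INV v" shows "INV (u \<otimes>\<^bsub>BX\<^esub> v)"
proof -
  have uv: "u \<in> Bij XX" "v \<in> Bij XX" using assms unfolding INV_def by auto
  have "u \<otimes>\<^bsub>BX\<^esub> v \<in> Bij XX" using uv monoid.m_closed[OF group.is_monoid[OF grpBX]] carrier_BX by metis
  moreover have "\<forall>y\<in>XX. blk ((u \<otimes>\<^bsub>BX\<^esub> v) y) = blk y"
    using assms uv by (simp add: eval_mult INV_def Bij_X)
  moreover have "\<forall>r>0. \<exists>c. \<forall>i. 0 \<le> i \<and> i < int r \<longrightarrow> (u \<otimes>\<^bsub>BX\<^esub> v) (Inr (r,i)) = zR c (Inr (r,i))"
  proof (intro allI impI)
    fix r :: nat assume r: "r > 0"
    obtain c1 where c1: "\<forall>i. 0 \<le> i \<and> i < int r \<longrightarrow> u (Inr (r,i)) = zR c1 (Inr (r,i))" using assms(1) r unfolding INV_def by blast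
    obtain c2 where c2: "\<forall>i. 0 \<le> i \<and> i < int r \<longrightarrow> v (Inr (r,i)) = zR c2 (Inr (r,i))" using assms(2) r unfolding INV_def by blast
    show "\<exists>c. \<forall>i. 0 \<le> i \<and> i < int r \<longrightarrow> (u \<otimes>\<^bsub>BX\<^esub> v) (Inr (r,i)) = zR c (Inr (r,i))"
    proof (intro exI[of _ "c2 + c1"] allI impI)
      fix i :: int assume i: "0 \<le> i \<and> i < int r"
      have y: "Inr (r,i) \<in> XX" using i r by (simp add: XX_Inr)
      have "(u \<otimes>\<^bsub>BX\<^esub> v) (Inr (r,i)) = u (zR c2 (Inr (r,i)))" using uv y c2 i by (simp add: eval_mult)
      also have "zR c2 (Inr (r,i)) = Inr (r, (i + c2) mod int r)" by (simp add: zR_def)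
      also have "u \<dots> = zR c1 (Inr (r, (i + c2) mod int r))" using c1 r by simp
      also have "\<dots> = zR c1 (zR c2 (Inr (r,i)))" by (simp add: zR_def)
      also have "\<dots> = zR (c2 + c1) (Inr (r,i))" using zR_comp[OF y] .
      finally show "(u \<otimes>\<^bsub>BX\<^esub> v) (Inr (r,i)) = zR (c2 + c1) (Inr (r,i))" .
    qed
  qed
  ultimately show ?thesis unfolding INV_def by blast
qed

lemma SS_inv: "s \<in> SS \<Longrightarrow> inv\<^bsub>BX\<^esub> s \<in> SS"
  unfolding SS_def by (auto simp: TT_inv AA_inv ZZ_inv BB_inv)

lemma INV_SS: "s \<in> SS \<Longrightarrow> INV s"
  unfolding SS_def using INV_TT INV_AA INV_BB INV_ZZ by auto

lemma INV_HH: "h \<in> carrier HH \<Longrightarrow> INV h"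
proof -
  assume "h \<in> carrier HH"
  then have "h \<in> generate BX SS" by simp
  then show "INV h"
  proof induction
    case one then show ?case by (rule INV_one)
  next
    case (incl h) then show ?case by (rule INV_SS)
  next
    case (inv h) then show ?case using SS_inv INV_SS by blast
  next
    case (eng h1 h2) then show ?case using INV_mult by blast
  qed
qed

lemma reach_cat:
  assumes grp: "group G" and S: "S \<subseteq> carrier G" and x: "reach G S n x"
  shows "reach G S m y \<Longrightarrow> reach G S (n + m) (x \<otimes>\<^bsub>G\<^esub> y)"
proof (induction rule: reach.induct)
  case r0
  have "x \<in> carrier G" using reach_carrier[OF grp S x] .
  then show ?case using x by (simp add: monoid.r_one[OF group.is_monoid[OF grp]])
next
  case (rstay m y) then show ?case by (simp add: reach.rstay)
next
  case (rstep m y s)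
  have xc: "x \<in> carrier G" using reach_carrier[OF grp S x] .
  have yc: "y \<in> carrier G" using reach_carrier[OF grp S rstep(1)] .
  have "x \<otimes>\<^bsub>G\<^esub> (y \<otimes>\<^bsub>G\<^esub> s) = (x \<otimes>\<^bsub>G\<^esub> y) \<otimes>\<^bsub>G\<^esub> s"
    using xc yc rstep(2) S by (simp add: monoid.m_assoc[OF group.is_monoid[OF grp]] subsetD)
  then show ?case using reach.rstep[OF rstep(3) rstep(2)] by simp
qed

lemma reach_finite: "finite S \<Longrightarrow> finite {g. reach G S n g}"
proof (induction n)
  case 0
  have "{g. reach G S 0 g} \<subseteq> {\<one>\<^bsub>G\<^esub>}"
  proof
    fix x assume "x \<in> {g. reach G S 0 g}"
    then have "reach G S 0 x" by simp
    then show "x \<in> {\<one>\<^bsub>G\<^esub>}" by (cases rule: reach.cases) simp_all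
  qed
  then show ?case using finite_subset by blast
next
  case (Suc n)
  let ?A = "{g. reach G S n g}"
  have sub: "{g. reach G S (Suc n) g} \<subseteq> ?A \<union> (\<lambda>p. fst p \<otimes>\<^bsub>G\<^esub> snd p) ` (?A \<times> S)"
  proof
    fix x assume "x \<in> {g. reach G S (Suc n) g}"
    then have "reach G S (Suc n) x" by simp
    then consider (a) "reach G S n x" | (b) g s where "reach G S n g" "s \<in> S" "x = g \<otimes>\<^bsub>G\<^esub> s"
      by (cases rule: reach.cases) simp_all
    then show "x \<in> ?A \<union> (\<lambda>p. fst p \<otimes>\<^bsub>G\<^esub> snd p) ` (?A \<times> S)"
    proof cases
      case a then show ?thesis by simp
    next
      case (b g s)
      then have "x = (\<lambda>p. fst p \<otimes>\<^bsub>G\<^esub> snd p) (g,s)" "(g,s) \<in> ?A \<times> S" by simp_all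
      then show ?thesis by blast
    qed
  qed
  have "finite (?A \<union> (\<lambda>p. fst p \<otimes>\<^bsub>G\<^esub> snd p) ` (?A \<times> S))"
    using Suc by (simp add: finite_cartesian_product)
  then show ?case using finite_subset[OF sub] by blast
qed

lemma SS_fin: "finite SS" "SS \<noteq> {}" "card SS \<le> 7"
proof -
  have e: "SS = set [TT 1, TT (-1), AA 1, AA (-1), BB, ZZ 1, ZZ (-1)]" unfolding SS_def by simp
  show "finite SS" "SS \<noteq> {}" unfolding SS_def by auto
  show "card SS \<le> 7" unfolding e using card_length[of "[TT 1, TT (-1), AA 1, AA (-1), BB, ZZ 1, ZZ (-1)]"] by simp
qed

lemma SS_HH: "SS \<subseteq> carrier HH" by (auto intro: generate.incl)

lemma SS_inv_HH: "\<forall>s\<in>SS. inv\<^bsub>HH\<^esub> s \<in> SS"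
  using SS_HH HH_inv SS_inv by auto

lemma reach_HH: "h \<in> carrier HH \<Longrightarrow> \<exists>n. reach HH SS n h"
proof -
  assume "h \<in> carrier HH"
  then have "h \<in> generate BX SS" by simp
  then show "\<exists>n. reach HH SS n h"
  proof induction
    case one then show ?case using reach.r0[of HH SS] by auto
  next
    case (incl h)
    have r: "reach HH SS (Suc 0) (\<one>\<^bsub>HH\<^esub> \<otimes>\<^bsub>HH\<^esub> h)" by (rule reach.rstep[OF reach.r0[of HH SS] incl])
    have h1: "h \<in> carrier HH" using incl SS_HH by blast
    have e: "\<one>\<^bsub>HH\<^esub> \<otimes>\<^bsub>HH\<^esub> h = h" by (rule monoid.l_one[OF group.is_monoid[OF grpHH] h1])
    from r have "reach HH SS (Suc 0) h" by (simp only: e)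
    then show ?case by blast
  next
    case (inv h)
    then have hs: "inv\<^bsub>BX\<^esub> h \<in> SS" by (rule SS_inv)
    have r: "reach HH SS (Suc 0) (\<one>\<^bsub>HH\<^esub> \<otimes>\<^bsub>HH\<^esub> inv\<^bsub>BX\<^esub> h)" by (rule reach.rstep[OF reach.r0[of HH SS] hs])
    have h1: "inv\<^bsub>BX\<^esub> h \<in> carrier HH" using hs SS_HH by blast
    have e: "\<one>\<^bsub>HH\<^esub> \<otimes>\<^bsub>HH\<^esub> inv\<^bsub>BX\<^esub> h = inv\<^bsub>BX\<^esub> h" by (rule monoid.l_one[OF group.is_monoid[OF grpHH] h1])
    from r have "reach HH SS (Suc 0) (inv\<^bsub>BX\<^esub> h)" by (simp only: e)
    then show ?case by blast
  next
    case (eng h1 h2)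
    then obtain n1 n2 where "reach HH SS n1 h1" "reach HH SS n2 h2" by blast
    then have "reach HH SS (n1 + n2) (h1 \<otimes>\<^bsub>HH\<^esub> h2)" using reach_cat[OF grpHH SS_HH] by blast
    then have "reach HH SS (n1 + n2) (h1 \<otimes>\<^bsub>BX\<^esub> h2)" by (simp only: HH_simps)
    then show ?case by blast
  qed
qed

lemma countable_HH: "countable (carrier HH)"
proof -
  have "carrier HH \<subseteq> (\<Union>n. {g. reach HH SS n g})" using reach_HH by blast
  moreover have "countable (\<Union>n. {g. reach HH SS n g})"
    by (rule countable_UN) (simp_all add: countable_finite[OF reach_finite[OF SS_fin(1)]])
  ultimately show ?thesis using countable_subset by blast
qed

lemma factor_card:
  assumes "finite (\<phi> ` A)" "\<And>x y. x \<in> A \<Longrightarrow> y \<in> A \<Longrightarrow> \<phi> x = \<phi> y \<Longrightarrow> F x = F y"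
  shows "finite (F ` A) \<and> card (F ` A) \<le> card (\<phi> ` A)"
proof -
  define G where "G = (\<lambda>v. F (SOME x. x \<in> A \<and> \<phi> x = v))"
  have sub: "F ` A \<subseteq> G ` (\<phi> ` A)"
  proof
    fix u assume "u \<in> F ` A"
    then obtain x where x: "x \<in> A" "u = F x" by auto
    have "\<exists>x'. x' \<in> A \<and> \<phi> x' = \<phi> x" using x by blast
    then have "(SOME x'. x' \<in> A \<and> \<phi> x' = \<phi> x) \<in> A \<and> \<phi> (SOME x'. x' \<in> A \<and> \<phi> x' = \<phi> x) = \<phi> x" by (rule someI_ex)
    then have "G (\<phi> x) = u" unfolding G_def using assms(2) x by blast
    then show "u \<in> G ` (\<phi> ` A)" using x by blast
  qed
  have fin: "finite (G ` (\<phi> ` A))" using assms(1) by simp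
  have "card (F ` A) \<le> card (G ` (\<phi> ` A))" by (rule card_mono[OF fin sub])
  also have "\<dots> \<le> card (\<phi> ` A)" by (rule card_image_le[OF assms(1)])
  finally show ?thesis using finite_subset[OF sub fin] by blast
qed

definition Bl :: "nat + nat \<Rightarrow> pt set" where "Bl \<beta> = {y \<in> XX. blk y = \<beta>}"
definition Nk :: "nat + nat \<Rightarrow> (pt \<Rightarrow> pt) set" where "Nk \<beta> = {h \<in> carrier HH. \<forall>y\<in>Bl \<beta>. h y = y}"

lemma HH_bij: "h \<in> carrier HH \<Longrightarrow> h \<in> Bij XX" using HH_sub by blast

lemma HH_inv_right: "h \<in> carrier HH \<Longrightarrow> y \<in> XX \<Longrightarrow> h ((inv\<^bsub>HH\<^esub> h) y) = y"
proof -
  assume h: "h \<in> carrier HH" and y: "y \<in> XX"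
  have hi: "inv\<^bsub>HH\<^esub> h \<in> carrier HH" using group.inv_closed[OF grpHH h] .
  have "h \<otimes>\<^bsub>HH\<^esub> inv\<^bsub>HH\<^esub> h = \<one>\<^bsub>HH\<^esub>" using group.r_inv[OF grpHH h] .
  then have "(h \<otimes>\<^bsub>BX\<^esub> inv\<^bsub>HH\<^esub> h) y = \<one>\<^bsub>BX\<^esub> y" by simp
  then show ?thesis using eval_mult[OF HH_bij[OF h] HH_bij[OF hi] y] y by (simp add: one_BX)
qed

lemma HH_inv_left: "h \<in> carrier HH \<Longrightarrow> y \<in> XX \<Longrightarrow> (inv\<^bsub>HH\<^esub> h) (h y) = y"
proof -
  assume h: "h \<in> carrier HH" and y: "y \<in> XX"
  have hi: "inv\<^bsub>HH\<^esub> h \<in> carrier HH" using group.inv_closed[OF grpHH h] .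
  have "inv\<^bsub>HH\<^esub> h \<otimes>\<^bsub>HH\<^esub> h = \<one>\<^bsub>HH\<^esub>" using group.l_inv[OF grpHH h] .
  then have "(inv\<^bsub>HH\<^esub> h \<otimes>\<^bsub>BX\<^esub> h) y = \<one>\<^bsub>BX\<^esub> y" by simp
  then show ?thesis using eval_mult[OF HH_bij[OF hi] HH_bij[OF h] y] y by (simp add: one_BX)
qed

lemma HH_Bl: "h \<in> carrier HH \<Longrightarrow> y \<in> Bl \<beta> \<Longrightarrow> h y \<in> Bl \<beta>"
  using INV_HH[of h] unfolding INV_def Bl_def using Bij_X by auto

lemma HH_eval: "u \<in> carrier HH \<Longrightarrow> v \<in> carrier HH \<Longrightarrow> y \<in> XX \<Longrightarrow> (u \<otimes>\<^bsub>HH\<^esub> v) y = u (v y)"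
  using eval_mult HH_bij by simp

lemma Nk_normal: "Nk \<beta> \<lhd> HH"
proof -
  interpret H: group HH by (rule grpHH)
  have sub: "subgroup (Nk \<beta>) HH"
  proof (rule H.subgroupI)
    show "Nk \<beta> \<subseteq> carrier HH" unfolding Nk_def by auto
    have "\<one>\<^bsub>HH\<^esub> \<in> Nk \<beta>" unfolding Nk_def Bl_def using generate.one[of BX SS, unfolded one_BX] by (auto simp: one_BX)
    then show "Nk \<beta> \<noteq> {}" by blast
  next
    fix a assume a: "a \<in> Nk \<beta>"
    then have ac: "a \<in> carrier HH" unfolding Nk_def by auto
    show "inv\<^bsub>HH\<^esub> a \<in> Nk \<beta>" unfolding Nk_def
    proof (intro CollectI conjI ballI)
      show "inv\<^bsub>HH\<^esub> a \<in> carrier HH" by (rule H.inv_closed[OF ac])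
      fix y assume y: "y \<in> Bl \<beta>"
      then have "a y = y" using a unfolding Nk_def by auto
      then show "(inv\<^bsub>HH\<^esub> a) y = y" using HH_inv_left[OF ac, of y] y unfolding Bl_def by auto
    qed
  next
    fix a b assume ab: "a \<in> Nk \<beta>" "b \<in> Nk \<beta>"
    then have ac: "a \<in> carrier HH" and bc: "b \<in> carrier HH" unfolding Nk_def by auto
    show "a \<otimes>\<^bsub>HH\<^esub> b \<in> Nk \<beta>" unfolding Nk_def
    proof (intro CollectI conjI ballI)
      show "a \<otimes>\<^bsub>HH\<^esub> b \<in> carrier HH" by (rule H.m_closed[OF ac bc])
      fix y assume y: "y \<in> Bl \<beta>"
      then have "y \<in> XX" unfolding Bl_def by auto
      then show "(a \<otimes>\<^bsub>HH\<^esub> b) y = y" using HH_eval[OF ac bc] ab y unfolding Nk_def by auto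
    qed
  qed
  show ?thesis
  proof (rule H.normal_invI[OF sub])
    fix x h assume x: "x \<in> carrier HH" and h: "h \<in> Nk \<beta>"
    have hc: "h \<in> carrier HH" using h unfolding Nk_def by auto
    have xi: "inv\<^bsub>HH\<^esub> x \<in> carrier HH" by (rule H.inv_closed[OF x])
    show "x \<otimes>\<^bsub>HH\<^esub> h \<otimes>\<^bsub>HH\<^esub> inv\<^bsub>HH\<^esub> x \<in> Nk \<beta>" unfolding Nk_def
    proof (intro CollectI conjI ballI)
      show "x \<otimes>\<^bsub>HH\<^esub> h \<otimes>\<^bsub>HH\<^esub> inv\<^bsub>HH\<^esub> x \<in> carrier HH" by (rule H.m_closed[OF H.m_closed[OF x hc] xi])
      fix y assume y: "y \<in> Bl \<beta>"
      have yX: "y \<in> XX" using y unfolding Bl_def by auto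
      have w: "(inv\<^bsub>HH\<^esub> x) y \<in> Bl \<beta>" using HH_Bl[OF xi y] .
      then have wX: "(inv\<^bsub>HH\<^esub> x) y \<in> XX" unfolding Bl_def by auto
      have "(x \<otimes>\<^bsub>HH\<^esub> h \<otimes>\<^bsub>HH\<^esub> inv\<^bsub>HH\<^esub> x) y = x (h ((inv\<^bsub>HH\<^esub> x) y))"
        using HH_eval[OF H.m_closed[OF x hc] xi yX] HH_eval[OF x hc wX] by simp
      also have "\<dots> = x ((inv\<^bsub>HH\<^esub> x) y)" using h w unfolding Nk_def by auto
      also have "\<dots> = y" using HH_inv_right[OF x yX] .
      finally show "(x \<otimes>\<^bsub>HH\<^esub> h \<otimes>\<^bsub>HH\<^esub> inv\<^bsub>HH\<^esub> x) y = y" .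
    qed
  qed
qed

lemma Nk_cosets:
  assumes fin: "finite ((\<lambda>h. restrict h (Bl \<beta>)) ` carrier HH)"
  shows "finite (rcosets\<^bsub>HH\<^esub> (Nk \<beta>)) \<and> card (rcosets\<^bsub>HH\<^esub> (Nk \<beta>)) \<le> card ((\<lambda>h. restrict h (Bl \<beta>)) ` carrier HH)"
proof -
  interpret H: group HH by (rule grpHH)
  have sub: "subgroup (Nk \<beta>) HH" using Nk_normal normal.axioms(1) by blast
  have rc: "rcosets\<^bsub>HH\<^esub> (Nk \<beta>) = (\<lambda>h. Nk \<beta> #>\<^bsub>HH\<^esub> h) ` carrier HH" unfolding RCOSETS_def by blast
  have key: "\<And>h1 h2. h1 \<in> carrier HH \<Longrightarrow> h2 \<in> carrier HH \<Longrightarrow> restrict h1 (Bl \<beta>) = restrict h2 (Bl \<beta>) \<Longrightarrow>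
      Nk \<beta> #>\<^bsub>HH\<^esub> h1 = Nk \<beta> #>\<^bsub>HH\<^esub> h2"
  proof -
    fix h1 h2 assume h1: "h1 \<in> carrier HH" and h2: "h2 \<in> carrier HH" and eq: "restrict h1 (Bl \<beta>) = restrict h2 (Bl \<beta>)"
    have h2i: "inv\<^bsub>HH\<^esub> h2 \<in> carrier HH" by (rule H.inv_closed[OF h2])
    let ?n = "h1 \<otimes>\<^bsub>HH\<^esub> inv\<^bsub>HH\<^esub> h2"
    have nN: "?n \<in> Nk \<beta>" unfolding Nk_def
    proof (intro CollectI conjI ballI)
      show "?n \<in> carrier HH" by (rule H.m_closed[OF h1 h2i])
      fix y assume y: "y \<in> Bl \<beta>"
      have yX: "y \<in> XX" using y unfolding Bl_def by auto
      have w: "(inv\<^bsub>HH\<^esub> h2) y \<in> Bl \<beta>" using HH_Bl[OF h2i y] .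
      have "?n y = h1 ((inv\<^bsub>HH\<^esub> h2) y)" using HH_eval[OF h1 h2i yX] .
      also have "\<dots> = h2 ((inv\<^bsub>HH\<^esub> h2) y)"
      proof -
        have "restrict h1 (Bl \<beta>) ((inv\<^bsub>HH\<^esub> h2) y) = restrict h2 (Bl \<beta>) ((inv\<^bsub>HH\<^esub> h2) y)" using eq by (rule arg_cong)
        then show ?thesis using w by simp
      qed
      also have "\<dots> = y" using HH_inv_right[OF h2 yX] .
      finally show "?n y = y" .
    qed
    have "?n \<otimes>\<^bsub>HH\<^esub> h2 = h1 \<otimes>\<^bsub>HH\<^esub> (inv\<^bsub>HH\<^esub> h2 \<otimes>\<^bsub>HH\<^esub> h2)" by (rule H.m_assoc[OF h1 h2i h2])
    also have "\<dots> = h1" using H.l_inv[OF h2] H.r_one[OF h1] by (simp only:)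
    finally have eqn: "?n \<otimes>\<^bsub>HH\<^esub> h2 = h1" .
    have "h1 \<in> Nk \<beta> #>\<^bsub>HH\<^esub> h2" unfolding r_coset_def using nN eqn by blast
    then have "Nk \<beta> #>\<^bsub>HH\<^esub> h2 = Nk \<beta> #>\<^bsub>HH\<^esub> h1" by (rule H.repr_independence[OF _ h2 sub])
    then show "Nk \<beta> #>\<^bsub>HH\<^esub> h1 = Nk \<beta> #>\<^bsub>HH\<^esub> h2" by (rule sym)
  qed
  show ?thesis unfolding rc by (rule factor_card[OF fin key])
qed

lemma Bl_Inl_fin: "finite (Bl (Inl j))"
proof -
  have "Bl (Inl j) \<subseteq> (\<lambda>p. Inl (j, fst p, snd p)) ` ({0..<mm j} \<times> {0..<int (PP j)})"
  proof
    fix y assume y: "y \<in> Bl (Inl j)"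
    then have yX: "y \<in> XX" and b: "blk y = Inl j" unfolding Bl_def by auto
    from yX show "y \<in> (\<lambda>p. Inl (j, fst p, snd p)) ` ({0..<mm j} \<times> {0..<int (PP j)})"
    proof (cases rule: XX_cases)
      case (1 j' i x)
      then have "j' = j" using b by simp
      then show ?thesis using 1 by (intro image_eqI[of _ _ "(i,x)"]) auto
    next
      case (2 r i) then show ?thesis using b by simp
    qed
  qed
  then show ?thesis using finite_subset by blast
qed

lemma Bl_Inr: "Bl (Inr r) = (\<lambda>i. Inr (r,i) :: pt) ` {0..<int r}"
proof (rule equalityI; rule subsetI)
  fix y assume y: "y \<in> Bl (Inr r)"
  then have yX: "y \<in> XX" and b: "blk y = Inr r" unfolding Bl_def by auto
  from yX show "y \<in> (\<lambda>i. Inr (r,i) :: pt) ` {0..<int r}"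
  proof (cases rule: XX_cases)
    case (1 j i x) then show ?thesis using b by simp
  next
    case (2 r' i)
    then have "r' = r" using b by simp
    then show ?thesis using 2 by (intro image_eqI[of _ _ i]) auto
  qed
next
  fix y assume "y \<in> (\<lambda>i. Inr (r,i) :: pt) ` {0..<int r}"
  then obtain i where i: "y = Inr (r,i)" "0 \<le> i" "i < int r" by auto
  then have "0 < r" by simp
  then show "y \<in> Bl (Inr r)" unfolding Bl_def using i by (simp add: XX_Inr)
qed

lemma Bl_Inr_fin: "finite (Bl (Inr r))" unfolding Bl_Inr by simp

lemma Bl_fin: "finite (Bl \<beta>)"
  by (cases \<beta>) (auto simp: Bl_Inl_fin Bl_Inr_fin)

lemma RF_HH: "\<forall>g\<in>carrier HH. g \<noteq> \<one>\<^bsub>HH\<^esub> \<longrightarrow> (\<exists>N. N \<lhd> HH \<and> finite (rcosets\<^bsub>HH\<^esub> N) \<and> g \<notin> N)"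
proof (intro ballI impI)
  fix g assume g: "g \<in> carrier HH" "g \<noteq> \<one>\<^bsub>HH\<^esub>"
  have "\<exists>y\<in>XX. g y \<noteq> y"
  proof (rule ccontr)
    assume "\<not> (\<exists>y\<in>XX. g y \<noteq> y)"
    then have "g = restrict id XX"
      by (intro extensionalityI[OF Bij_imp_extensional[OF HH_bij[OF g(1)]] restrict_extensional]) simp
    then show False using g(2) by (simp add: one_BX)
  qed
  then obtain y where y: "y \<in> XX" "g y \<noteq> y" by blast
  let ?\<beta> = "blk y"
  have yB: "y \<in> Bl ?\<beta>" unfolding Bl_def using y by simp
  have fin: "finite ((\<lambda>h. restrict h (Bl ?\<beta>)) ` carrier HH)"
  proof (rule finite_subset)
    show "(\<lambda>h. restrict h (Bl ?\<beta>)) ` carrier HH \<subseteq> Pi\<^sub>E (Bl ?\<beta>) (\<lambda>_. Bl ?\<beta>)"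
      using HH_Bl by auto
    show "finite (Pi\<^sub>E (Bl ?\<beta>) (\<lambda>_. Bl ?\<beta>))" by (rule finite_PiE) (auto simp: Bl_fin)
  qed
  have "g \<notin> Nk ?\<beta>" unfolding Nk_def using yB y by auto
  then show "\<exists>N. N \<lhd> HH \<and> finite (rcosets\<^bsub>HH\<^esub> N) \<and> g \<notin> N"
    using Nk_normal Nk_cosets[OF fin] by blast
qed

lemma ZZ_HH: "ZZ 1 \<in> carrier HH" using SS_HH unfolding SS_def by auto

lemma ZQ_HH: "\<exists>z\<in>carrier HH. \<forall>r\<ge>1. \<exists>N. N \<lhd> HH \<and> finite (rcosets\<^bsub>HH\<^esub> N) \<and> card (rcosets\<^bsub>HH\<^esub> N) \<le> r \<and> (\<forall>i::nat. z [^]\<^bsub>HH\<^esub> i \<in> N \<longleftrightarrow> r dvd i)"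
proof (intro bexI[OF _ ZZ_HH] allI impI)
  fix r :: nat assume r: "r \<ge> 1"
  let ?\<beta> = "Inr r :: nat + nat"
  have sub: "(\<lambda>h. restrict h (Bl ?\<beta>)) ` carrier HH \<subseteq> (\<lambda>c. restrict (zR c) (Bl ?\<beta>)) ` {0..<int r}"
  proof
    fix u assume "u \<in> (\<lambda>h. restrict h (Bl ?\<beta>)) ` carrier HH"
    then obtain h where h: "h \<in> carrier HH" "u = restrict h (Bl ?\<beta>)" by auto
    obtain c where c: "\<forall>i. 0 \<le> i \<and> i < int r \<longrightarrow> h (Inr (r,i)) = zR c (Inr (r,i))"
    proof -
      have "r > 0" using r by simp
      then show ?thesis using INV_HH[OF h(1)] that unfolding INV_def by blast
    qed
    have "u = restrict (zR (c mod int r)) (Bl ?\<beta>)"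
      unfolding h(2) Bl_Inr using c by (auto intro!: restrict_ext simp: zR_def mod_add_right_eq)
    moreover have "c mod int r \<in> {0..<int r}" using r by simp
    ultimately show "u \<in> (\<lambda>c. restrict (zR c) (Bl ?\<beta>)) ` {0..<int r}" by blast
  qed
  have fin: "finite ((\<lambda>h. restrict h (Bl ?\<beta>)) ` carrier HH)"
    using sub finite_subset by blast
  have cardle: "card ((\<lambda>h. restrict h (Bl ?\<beta>)) ` carrier HH) \<le> r"
  proof -
    have "card ((\<lambda>h. restrict h (Bl ?\<beta>)) ` carrier HH) \<le> card ((\<lambda>c. restrict (zR c) (Bl ?\<beta>)) ` {0..<int r})"
      using sub by (simp add: card_mono)
    also have "\<dots> \<le> card {0..<int r}" by (rule card_image_le) simp
    finally show ?thesis by simp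
  qed
  have pw: "\<forall>i::nat. ZZ 1 [^]\<^bsub>HH\<^esub> i \<in> Nk ?\<beta> \<longleftrightarrow> r dvd i"
  proof
    fix i :: nat
    have pc: "ZZ 1 [^]\<^bsub>HH\<^esub> i \<in> carrier HH" using monoid.nat_pow_closed[OF group.is_monoid[OF grpHH] ZZ_HH] .
    have pe: "ZZ 1 [^]\<^bsub>HH\<^esub> i = ZZ (int i)" by (simp add: HH_pow ZZ_pow)
    have XI: "\<And>c. 0 \<le> c \<Longrightarrow> c < int r \<Longrightarrow> Inr (r,c) \<in> XX" using r by (simp add: XX_Inr)
    have "ZZ 1 [^]\<^bsub>HH\<^esub> i \<in> Nk ?\<beta> \<longleftrightarrow> (\<forall>y\<in>Bl ?\<beta>. ZZ (int i) y = y)"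
      unfolding Nk_def using pc pe by simp
    also have "\<dots> \<longleftrightarrow> (\<forall>c. 0 \<le> c \<and> c < int r \<longrightarrow> (c + int i) mod int r = c)"
    proof -
      have "\<And>c. 0 \<le> c \<Longrightarrow> c < int r \<Longrightarrow> ZZ (int i) (Inr (r,c)) = Inr (r, (c + int i) mod int r)"
        using XI unfolding ZZ_def by (simp add: zR_def)
      then show ?thesis unfolding Bl_Inr by auto
    qed
    also have "\<dots> \<longleftrightarrow> r dvd i"
    proof
      assume "\<forall>c. 0 \<le> c \<and> c < int r \<longrightarrow> (c + int i) mod int r = c"
      moreover have "0 \<le> (0::int) \<and> (0::int) < int r" using r by simp
      ultimately have "(0 + int i) mod int r = 0" by blast
      then have "int r dvd int i" by (simp add: dvd_eq_mod_eq_0)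
      then show "r dvd i" by simp
    next
      assume "r dvd i"
      then have m0: "int i mod int r = 0" by simp
      show "\<forall>c. 0 \<le> c \<and> c < int r \<longrightarrow> (c + int i) mod int r = c"
      proof (intro allI impI)
        fix c :: int assume "0 \<le> c \<and> c < int r"
        then have "(c + int i mod int r) mod int r = c" using m0 by simp
        then show "(c + int i) mod int r = c" by (simp add: mod_add_right_eq)
      qed
    qed
    finally show "ZZ 1 [^]\<^bsub>HH\<^esub> i \<in> Nk ?\<beta> \<longleftrightarrow> r dvd i" .
  qed
  show "\<exists>N. N \<lhd> HH \<and> finite (rcosets\<^bsub>HH\<^esub> N) \<and> card (rcosets\<^bsub>HH\<^esub> N) \<le> r \<and> (\<forall>i::nat. ZZ 1 [^]\<^bsub>HH\<^esub> i \<in> N \<longleftrightarrow> r dvd i)"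
  proof (intro exI[of _ "Nk ?\<beta>"] conjI)
    show "Nk ?\<beta> \<lhd> HH" by (rule Nk_normal)
    show "finite (rcosets\<^bsub>HH\<^esub> Nk ?\<beta>)" using Nk_cosets[OF fin] by blast
    show "card (rcosets\<^bsub>HH\<^esub> Nk ?\<beta>) \<le> r" using Nk_cosets[OF fin] cardle le_trans by blast
    show "\<forall>i::nat. ZZ 1 [^]\<^bsub>HH\<^esub> i \<in> Nk ?\<beta> \<longleftrightarrow> r dvd i" by (rule pw)
  qed
qed

lemma pow_mod_K:
  fixes j k :: nat
  assumes "((2::int)^j + 2^k) mod 2^(Suc j) = 0"
  shows "j = k"
proof (rule ccontr)
  assume ne: "j \<noteq> k"
  show False
  proof (cases "j < k")
    case True
    then have "(2::int)^k = 2^(Suc j) * 2^(k - Suc j)"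
      by (metis Suc_leI le_add_diff_inverse power_add)
    then have "((2::int)^j + 2^k) mod 2^(Suc j) = 2^j mod 2^(Suc j)" by simp
    also have "\<dots> = 2^j" by simp
    finally show False using assms by simp
  next
    case False
    then have "k < j" using ne by simp
    then have "(2::int)^k < 2^j" by simp
    then have "(2::int)^j + 2^k < 2^(Suc j)" by simp
    moreover have pos: "(0::int) < 2^j + 2^k" by (intro add_pos_pos) simp_all
    ultimately have "((2::int)^j + 2^k) mod 2^(Suc j) = 2^j + 2^k" by simp
    then show False using assms pos by simp
  qed
qed

lemma F1: "(P::int) > 0 \<Longrightarrow> 0 \<le> x \<Longrightarrow> x < P \<Longrightarrow> (- ((- x) mod P)) mod P = x"
  by (simp add: mod_minus_eq)

lemma F2: "(P::int) > 0 \<Longrightarrow> 0 \<le> x \<Longrightarrow> x < P \<Longrightarrow> ((x + 1) mod P + -1) mod P = x"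
  by (simp add: mod_simps)

lemma F3: "(P::int) > 0 \<Longrightarrow> (- (((- x) mod P + 1) mod P) mod P + -1) mod P = (x - 2) mod P"
  by (simp add: mod_simps)

definition gR :: "nat \<Rightarrow> pt \<Rightarrow> pt" where
  "gR k y = (case y of Inl (j,i,x) \<Rightarrow> Inl (j, i, if j = k \<and> i = 2^k then (x - 2) mod int (PP j) else x) | Inr q \<Rightarrow> Inr q)"

definition gpR :: "nat \<Rightarrow> nat \<Rightarrow> pt \<Rightarrow> pt" where
  "gpR k n y = (case y of Inl (j,i,x) \<Rightarrow> Inl (j, i, if j = k \<and> i = 2^k then (x - 2 * int n) mod int (PP j) else x) | Inr q \<Rightarrow> Inr q)"

lemma comp_val:
  assumes y: "y \<in> XX"
  shows "aR (-1) (tR (- (2^k)) (bR (tR (2^k) (aR 1 (tR (- (2^k)) (bR (tR (2^k) y))))))) = gR k y"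
  using y
proof (cases rule: XX_cases)
  case (2 r i)
  then show ?thesis by (simp add: aR_def tR_def bR_def gR_def)
next
  case (1 j i x)
  define M where "M = mm j"
  define P where "P = int (PP j)"
  define L :: int where "L = 2^k"
  have P0: "P > 0" unfolding P_def by (rule PP_pos)
  have xr: "0 \<le> x" "x < P" using 1 P_def by auto
  have ir: "0 \<le> i" "i < M" using 1 M_def by auto
  define i1 where "i1 = (i + L) mod M"
  have bk: "(i1 - L) mod M = i" unfolding i1_def using ir by (simp add: mod_diff_left_eq)
  have bk2: "(i1 + - L) mod M = i" using bk by simp
  define x1 where "x1 = (if i1 = 0 then (- x) mod P else x)"
  define x2 where "x2 = (if i = 2^j then (x1 + 1) mod P else x1)"
  define x3 where "x3 = (if i1 = 0 then (- x2) mod P else x2)"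
  define x4 where "x4 = (if i = 2^j then (x3 + -1) mod P else x3)"
  have "aR (-1) (tR (- (2^k)) (bR (tR (2^k) (aR 1 (tR (- (2^k)) (bR (tR (2^k) y))))))) = Inl (j, i, x4)"
    unfolding 1(1) x4_def x3_def x2_def x1_def
    by (simp add: aR_def tR_def bR_def L_def[symmetric] M_def[symmetric] P_def[symmetric] i1_def[symmetric] bk bk2)
  also have "x4 = (if j = k \<and> i = 2^k then (x - 2) mod P else x)"
  proof (cases "i1 = 0"; cases "i = 2^j")
    assume a: "i1 = 0" "i = 2^j"
    then have "((2::int)^j + 2^k) mod 2^(Suc j) = 0" unfolding i1_def L_def M_def mm_def by simp
    then have jk: "j = k" by (rule pow_mod_K)
    show ?thesis using a jk P0 unfolding x4_def x3_def x2_def x1_def by (simp add: mod_simps)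
  next
    assume a: "i1 = 0" "i \<noteq> 2^j"
    have "\<not> (j = k \<and> i = 2^k)" using a by auto
    then show ?thesis using a P0 xr unfolding x4_def x3_def x2_def x1_def by (auto simp: F1)
  next
    assume a: "i1 \<noteq> 0" "i = 2^j"
    have "\<not> (j = k \<and> i = 2^k)"
    proof
      assume "j = k \<and> i = 2^k"
      then have "i1 = (2^k + 2^k) mod 2^(Suc k)" unfolding i1_def L_def M_def mm_def by simp
      also have "\<dots> = 0" by simp
      finally show False using a by simp
    qed
    then show ?thesis using a P0 xr unfolding x4_def x3_def x2_def x1_def by (auto simp: mod_simps)
  next
    assume a: "i1 \<noteq> 0" "i \<noteq> 2^j"
    have "\<not> (j = k \<and> i = 2^k)" using a by auto
    then show ?thesis using a unfolding x4_def x3_def x2_def x1_def by auto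
  qed
  finally show ?thesis unfolding 1(1) gR_def P_def by simp
qed

lemma mclosed: "u \<in> Bij XX \<Longrightarrow> v \<in> Bij XX \<Longrightarrow> u \<otimes>\<^bsub>BX\<^esub> v \<in> Bij XX"
  using monoid.m_closed[OF group.is_monoid[OF grpBX]] carrier_BX by metis

lemma TT_ev: "y \<in> XX \<Longrightarrow> TT c y = tR c y" unfolding TT_def by simp
lemma AA_ev: "y \<in> XX \<Longrightarrow> AA c y = aR c y" unfolding AA_def by simp
lemma BB_ev: "y \<in> XX \<Longrightarrow> BB y = bR y" unfolding BB_def by simp

definition gk :: "nat \<Rightarrow> pt \<Rightarrow> pt" where
  "gk k = AA (-1) \<otimes>\<^bsub>BX\<^esub> TT (- (2^k)) \<otimes>\<^bsub>BX\<^esub> BB \<otimes>\<^bsub>BX\<^esub> TT (2^k) \<otimes>\<^bsub>BX\<^esub> AA 1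
     \<otimes>\<^bsub>BX\<^esub> TT (- (2^k)) \<otimes>\<^bsub>BX\<^esub> BB \<otimes>\<^bsub>BX\<^esub> TT (2^k)"

lemma gk_Bij: "gk k \<in> Bij XX"
  unfolding gk_def by (intro mclosed TT_Bij AA_Bij BB_Bij)

lemma gR_X: "y \<in> XX \<Longrightarrow> gR k y \<in> XX"
  by (erule XX_cases) (auto simp: gR_def XX_Inl XX_Inr PP_pos)

lemma gk_eq: "gk k = restrict (gR k) XX"
proof (rule extensionalityI[OF Bij_imp_extensional[OF gk_Bij] restrict_extensional])
  fix y assume y: "y \<in> XX"
  have "gk k y = aR (-1) (tR (- (2^k)) (bR (tR (2^k) (aR 1 (tR (- (2^k)) (bR (tR (2^k) y)))))))"
    unfolding gk_def using y
    by (simp add: eval_mult mclosed TT_Bij AA_Bij BB_Bij Bij_X TT_ev AA_ev BB_ev tR_X aR_X bR_X)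
  also have "\<dots> = gR k y" by (rule comp_val[OF y])
  finally show "gk k y = restrict (gR k) XX y" using y by simp
qed

lemma gpR0: "y \<in> XX \<Longrightarrow> gpR k 0 y = y"
  by (erule XX_cases) (auto simp: gpR_def)

lemma gpR_step: "y \<in> XX \<Longrightarrow> gpR k n (gR k y) = gpR k (Suc n) y"
  by (erule XX_cases) (auto simp: gpR_def gR_def mod_simps algebra_simps)

lemma gk_pow: "gk k [^]\<^bsub>BX\<^esub> (n::nat) = restrict (gpR k n) XX"
proof (induction n)
  case 0
  have "restrict id XX = restrict (gpR k 0) XX" by (rule restrict_ext) (simp add: gpR0)
  then show ?case by (simp add: one_BX)
next
  case (Suc n)
  have pc: "gk k [^]\<^bsub>BX\<^esub> n \<in> Bij XX"
    using monoid.nat_pow_closed[OF group.is_monoid[OF grpBX], of "gk k" n] gk_Bij carrier_BX by simp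
  have "gk k [^]\<^bsub>BX\<^esub> Suc n = gk k [^]\<^bsub>BX\<^esub> n \<otimes>\<^bsub>BX\<^esub> gk k" by simp
  also have "\<dots> = restrict (gpR k n) XX \<otimes>\<^bsub>BX\<^esub> restrict (gR k) XX" using Suc gk_eq[of k] by (simp only:)
  also have "\<dots> = restrict (\<lambda>y. gpR k n (gR k y)) XX"
  proof -
    have pc': "restrict (gpR k n) XX \<in> Bij XX" using pc unfolding Suc.IH .
    have g': "restrict (gR k) XX \<in> Bij XX" using gk_Bij[of k] unfolding gk_eq .
    show ?thesis by (rule mult_restrict[OF pc' g' gR_X])
  qed
  also have "\<dots> = restrict (gpR k (Suc n)) XX" by (auto intro!: restrict_ext simp: gpR_step)
  finally show ?case .
qed

lemma gk_ord: "gk k [^]\<^bsub>BX\<^esub> PP k = \<one>\<^bsub>BX\<^esub>"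
proof -
  have "\<And>y. y \<in> XX \<Longrightarrow> gpR k (PP k) y = y"
  proof -
    fix y assume "y \<in> XX"
    then show "gpR k (PP k) y = y"
    proof (cases rule: XX_cases)
      case (1 j i x)
      have "(x - 2 * int (PP j)) mod int (PP j) = (x + (-2) * int (PP j)) mod int (PP j)" by simp
      also have "\<dots> = x mod int (PP j)" by (rule mod_mult_self1)
      also have "\<dots> = x" using 1 by simp
      finally show ?thesis using 1 by (auto simp: gpR_def)
    next
      case (2 r i) then show ?thesis by (simp add: gpR_def)
    qed
  qed
  then show ?thesis unfolding gk_pow one_BX by (auto intro!: restrict_ext)
qed

lemma gk_ne: "gk k \<noteq> \<one>\<^bsub>BX\<^esub>"
proof
  assume e: "gk k = \<one>\<^bsub>BX\<^esub>"
  let ?y = "Inl (k, 2^k, 0) :: pt"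
  have y: "?y \<in> XX" using PP_pos[of k] by (simp add: XX_Inl mm_def)
  have "gk k ?y = Inl (k, 2^k, (-2) mod int (PP k))" unfolding gk_eq using y by (simp add: gR_def)
  moreover have "\<one>\<^bsub>BX\<^esub> ?y = ?y" using y by (simp add: one_BX)
  ultimately have "(-2) mod int (PP k) = 0" using e by simp
  then have "int (PP k) dvd 2" by (simp add: dvd_eq_mod_eq_0[symmetric])
  then have "int (PP k) \<le> 2" by (rule zdvd_imp_le) simp
  then show False using PP_gt2[of k] by simp
qed

lemma reach_pow:
  assumes grp: "group G" and S: "S \<subseteq> carrier G" and s: "s \<in> S" and x: "reach G S n x"
  shows "reach G S (n + m) (x \<otimes>\<^bsub>G\<^esub> s [^]\<^bsub>G\<^esub> (m::nat))"
proof (induction m)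
  case 0
  have "x \<in> carrier G" using reach_carrier[OF grp S x] .
  then show ?case using x by (simp add: monoid.r_one[OF group.is_monoid[OF grp]])
next
  case (Suc m)
  have xc: "x \<in> carrier G" using reach_carrier[OF grp S x] .
  have sc: "s \<in> carrier G" using s S by blast
  have "x \<otimes>\<^bsub>G\<^esub> s [^]\<^bsub>G\<^esub> Suc m = (x \<otimes>\<^bsub>G\<^esub> s [^]\<^bsub>G\<^esub> m) \<otimes>\<^bsub>G\<^esub> s"
    using xc sc by (simp add: monoid.m_assoc[OF group.is_monoid[OF grp]] monoid.nat_pow_closed[OF group.is_monoid[OF grp]])
  then show ?case using reach.rstep[OF Suc s] by simp
qed

lemma reach_gk: "reach HH SS (ellen k) (gk k)"
proof -
  let ?L = "2^k :: nat"
  have S: "SS \<subseteq> carrier HH" by (rule SS_HH)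
  have inS: "TT 1 \<in> SS" "TT (-1) \<in> SS" "AA 1 \<in> SS" "AA (-1) \<in> SS" "BB \<in> SS" unfolding SS_def by auto
  note rp = reach_pow[OF grpHH S]
  note rs = reach.rstep[where G=HH and S=SS]
  have r1: "reach HH SS (Suc 0) (\<one>\<^bsub>HH\<^esub> \<otimes>\<^bsub>HH\<^esub> AA (-1))" by (rule rs[OF reach.r0 inS(4)])
  note r2 = rp[OF inS(2) r1, of ?L]
  note r3 = rs[OF r2 inS(5)]
  note r4 = rp[OF inS(1) r3, of ?L]
  note r5 = rs[OF r4 inS(3)]
  note r6 = rp[OF inS(2) r5, of ?L]
  note r7 = rs[OF r6 inS(5)]
  note r8 = rp[OF inS(1) r7, of ?L]
  have len: "Suc (Suc (Suc (Suc 0 + ?L) + ?L) + ?L) + ?L = ellen k" unfolding ellen_def by simp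
  have one: "\<one>\<^bsub>BX\<^esub> \<otimes>\<^bsub>BX\<^esub> AA (-1) = AA (-1)"
    using monoid.l_one[OF group.is_monoid[OF grpBX]] AA_Bij carrier_BX by metis
  have "\<one>\<^bsub>HH\<^esub> \<otimes>\<^bsub>HH\<^esub> AA (-1) \<otimes>\<^bsub>HH\<^esub> TT (-1) [^]\<^bsub>HH\<^esub> ?L \<otimes>\<^bsub>HH\<^esub> BB \<otimes>\<^bsub>HH\<^esub> TT 1 [^]\<^bsub>HH\<^esub> ?L
      \<otimes>\<^bsub>HH\<^esub> AA 1 \<otimes>\<^bsub>HH\<^esub> TT (-1) [^]\<^bsub>HH\<^esub> ?L \<otimes>\<^bsub>HH\<^esub> BB \<otimes>\<^bsub>HH\<^esub> TT 1 [^]\<^bsub>HH\<^esub> ?L = gk k"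
    unfolding gk_def by (simp add: HH_pow TT_pow one)
  then show ?thesis using r8 len by simp
qed

lemma TOR_HH: "\<forall>k. \<exists>g p. reach HH SS (ellen k) g \<and> g \<noteq> \<one>\<^bsub>HH\<^esub> \<and> Factorial_Ring.prime (p::nat) \<and> g [^]\<^bsub>HH\<^esub> p = \<one>\<^bsub>HH\<^esub> \<and> Fb (ellen (Suc k)) \<le> p"
proof
  fix k
  show "\<exists>g p. reach HH SS (ellen k) g \<and> g \<noteq> \<one>\<^bsub>HH\<^esub> \<and> Factorial_Ring.prime (p::nat) \<and> g [^]\<^bsub>HH\<^esub> p = \<one>\<^bsub>HH\<^esub> \<and> Fb (ellen (Suc k)) \<le> p"
    using reach_gk[of k] gk_ne[of k] PP[of k] gk_ord[of k]
    by (intro exI[of _ "gk k"] exI[of _ "PP k"]) (auto simp: HH_pow)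
qed

theorem final:
  shows "\<exists>(G :: nat monoid) S.
    group G \<and> finitely_generated G \<and> residually_finite G \<and> symmetric_gen_set G S \<and>
    filterlim (\<lambda>n. measure_pmf.expectation (lazy_walk G S n) (\<lambda>x. real (D_G G x))) at_top sequentially \<and>
    summable (\<lambda>k. 1 / real (grp_index G (Lambda G (k + 2))))"
  by (rule transfer_nat[OF grpHH countable_HH SS_fin(1) SS_fin(2) SS_HH SS_inv_HH SS_fin(3) _ RF_HH TOR_HH ZQ_HH])
     (use reach_HH in blast)

theorem proposition4p8:
  shows "\<exists>(G :: nat monoid) S.
    group G \<and> finitely_generated G \<and> residually_finite G \<and> symmetric_gen_set G S \<and>
    filterlim (\<lambda>n. measure_pmf.expectation (lazy_walk G S n) (\<lambda>x. real (D_G G x))) at_top sequentially \<and>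
    summable (\<lambda>k. 1 / real (grp_index G (Lambda G (k + 2))))"
  by (rule final)

end
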